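(* Define on $(0,\pi/2)$ \[ A(x)=(\sin x-x\cos x)^2\cos x,\quad B(x)=x(\sin x-x\cos x)\sin^2x,\quad C(x)=-(2x^2\cos x-x\sin x-\cos x\sin^2x), \] and $g_2(x)=\dfrac{C(x)-\frac85A(x)}{B(x)-3A(x)}$. Then (i) $B(x)-3A(x)>0$ for $x\in(0,\pi/2)$; (ii) $g_2$ is increasing on $(0,\pi/2)$ and $\frac{34}{35}<g_2(x)<1$ for $x\in(0,\pi/2)$. *)

theory Defs
  imports Complex_Main
begin

definition lemA :: "real \<Rightarrow> real" where
  "lemA x = (sin x - x * cos x)^2 * cos x"

definition lemB :: "real \<Rightarrow> real" where
  "lemB x = x * (sin x - x * cos x) * (sin x)^2"

definition lemC :: "real \<Rightarrow> real" where
  "lemC x = - (2 * x^2 * cos x - x * sin x - cos x * (sin x)^2)"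

definition g2 :: "real \<Rightarrow> real" where
  "g2 x = (lemC x - 8/5 * lemA x) / (lemB x - 3 * lemA x)"

end

theory Submission
  imports Defs
begin


lemma pade_generic:
  fixes g :: "real \<Rightarrow> real" and d :: "real \<Rightarrow> real"
  assumes "0 \<le> t" and "g 0 = 0"
    and "\<And>y. 0 \<le> y \<Longrightarrow> (g has_real_derivative d y) (at y)"
    and "\<And>y. 0 \<le> y \<Longrightarrow> 0 \<le> d y"
  shows "0 \<le> g t"
proof -
  have "g 0 \<le> g t"
    by (rule DERIV_nonneg_imp_nondecreasing[OF assms(1)]) (use assms in auto)
  thus ?thesis using assms(2) by simp
qed

lemma pade_frame:
  fixes P P' Q Q' :: "real \<Rightarrow> real" and c :: real and k :: nat
  assumes "0 \<le> t"
    and dP: "\<And>y. (P has_real_derivative P' y) (at y)"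
    and dQ: "\<And>y. (Q has_real_derivative Q' y) (at y)"
    and Qpos: "\<And>y. 0 < Q y"
    and P0: "P 0 = 0"
    and iden: "\<And>y. (Q y)^2 - (1 + y^2) * (P' y * Q y - P y * Q' y) = c * y^k"
    and c: "0 \<le> c"
  shows "P t / Q t \<le> arctan t"
proof -
  have "0 \<le> (\<lambda>y. arctan y - P y / Q y) t"
  proof (rule pade_generic[OF assms(1)])
    fix y :: real assume y: "0 \<le> y"
    have qn: "Q y \<noteq> 0" using Qpos[of y] by simp
    have an: "1 + y^2 \<noteq> 0" by (smt (verit) zero_le_power2)
    show "((\<lambda>y. arctan y - P y / Q y) has_real_derivative (c * y^k / ((1 + y^2) * (Q y)^2))) (at y)"
      apply (rule DERIV_cong)
       apply (rule DERIV_diff[OF DERIV_arctan DERIV_divide[OF dP dQ qn]])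
      using iden[of y] qn an by (simp add: field_simps power2_eq_square)
    show "0 \<le> c * y^k / ((1 + y^2) * (Q y)^2)" using c y by simp
  qed (simp add: P0)
  thus ?thesis by simp
qed

lemma pade_frame_up:
  fixes P P' Q Q' :: "real \<Rightarrow> real" and c :: real and k :: nat
  assumes "0 \<le> t"
    and dP: "\<And>y. (P has_real_derivative P' y) (at y)"
    and dQ: "\<And>y. (Q has_real_derivative Q' y) (at y)"
    and Qpos: "\<And>y. 0 < Q y"
    and P0: "P 0 = 0"
    and iden: "\<And>y. (Q y)^2 - (1 + y^2) * (P' y * Q y - P y * Q' y) = c * y^k"
    and c: "c \<le> 0"
  shows "arctan t \<le> P t / Q t"
proof -
  have "0 \<le> (\<lambda>y. P y / Q y - arctan y) t"
  proof (rule pade_generic[OF assms(1)])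
    fix y :: real assume y: "0 \<le> y"
    have qn: "Q y \<noteq> 0" using Qpos[of y] by simp
    have an: "1 + y^2 \<noteq> 0" by (smt (verit) zero_le_power2)
    show "((\<lambda>y. P y / Q y - arctan y) has_real_derivative ((- c) * y^k / ((1 + y^2) * (Q y)^2))) (at y)"
      apply (rule DERIV_cong)
       apply (rule DERIV_diff[OF DERIV_divide[OF dP dQ qn] DERIV_arctan])
      using iden[of y] qn an by (simp add: field_simps power2_eq_square)
    show "0 \<le> (- c) * y^k / ((1 + y^2) * (Q y)^2)" using c y by (intro divide_nonneg_nonneg mult_nonneg_nonneg) auto
  qed (simp add: P0)
  thus ?thesis by simp
qed

lemma piece_helper:
  fixes f :: "real \<Rightarrow> real"
  assumes "\<And>s. 0 \<le> s \<Longrightarrow> s \<le> 1 \<Longrightarrow> 0 < f (l + w*s)" and "0 < w" and "l \<le> y" and "y \<le> l + w"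
  shows "0 < f y"
proof -
  have "y = l + w*((y-l)/w)" using assms(2) by simp
  moreover have "0 \<le> (y-l)/w" using assms by simp
  moreover have "(y-l)/w \<le> 1" using assms by (simp add: divide_le_eq)
  ultimately show ?thesis using assms(1) by metis
qed

definition padeP2 :: "real \<Rightarrow> real" where "padeP2 y = (15*y + 4*y^3)"
definition padeQ2 :: "real \<Rightarrow> real" where "padeQ2 y = (15 + 9*y^2)"
lemma padeQ2_pos: "0 < padeQ2 (y::real)"
  unfolding padeQ2_def by (intro add_pos_nonneg mult_nonneg_nonneg) simp_all

lemma pade2: fixes t::real assumes "0 \<le> t" shows "arctan t \<le> padeP2 t / padeQ2 t"
proof (rule pade_frame_up[OF assms, where k=6 and c="(-36)" and P'="\<lambda>y. (15 + 12*y^2)" and Q'="\<lambda>y. (18*y)"])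
  show "(padeP2 has_real_derivative (15 + 12*y^2)) (at y)" for y
    unfolding padeP2_def[abs_def] by (auto intro!: derivative_eq_intros)
  show "(padeQ2 has_real_derivative (18*y)) (at y)" for y
    unfolding padeQ2_def[abs_def] by (auto intro!: derivative_eq_intros)
  show "0 < padeQ2 y" for y by (rule padeQ2_pos)
  show "padeP2 0 = 0" by (simp add: padeP2_def)
  show "(padeQ2 y)^2 - (1 + y^2) * ((15 + 12*y^2) * padeQ2 y - padeP2 y * (18*y)) = (-36) * y^6" for y
    unfolding padeP2_def padeQ2_def by algebra
qed (simp)

definition padeP3 :: "real \<Rightarrow> real" where "padeP3 y = (105*y + 55*y^3)"
definition padeQ3 :: "real \<Rightarrow> real" where "padeQ3 y = (105 + 90*y^2 + 9*y^4)"
lemma padeQ3_pos: "0 < padeQ3 (y::real)"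
  unfolding padeQ3_def by (intro add_pos_nonneg mult_nonneg_nonneg) simp_all

lemma pade3: fixes t::real assumes "0 \<le> t" shows "padeP3 t / padeQ3 t \<le> arctan t"
proof (rule pade_frame[OF assms, where k=8 and c="576" and P'="\<lambda>y. (105 + 165*y^2)" and Q'="\<lambda>y. (180*y + 36*y^3)"])
  show "(padeP3 has_real_derivative (105 + 165*y^2)) (at y)" for y
    unfolding padeP3_def[abs_def] by (auto intro!: derivative_eq_intros)
  show "(padeQ3 has_real_derivative (180*y + 36*y^3)) (at y)" for y
    unfolding padeQ3_def[abs_def] by (auto intro!: derivative_eq_intros)
  show "0 < padeQ3 y" for y by (rule padeQ3_pos)
  show "padeP3 0 = 0" by (simp add: padeP3_def)
  show "(padeQ3 y)^2 - (1 + y^2) * ((105 + 165*y^2) * padeQ3 y - padeP3 y * (180*y + 36*y^3)) = 576 * y^8" for y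
    unfolding padeP3_def padeQ3_def by algebra
qed (simp)

definition padeP8 :: "real \<Rightarrow> real" where "padeP8 y = (34459425*y + 61486425*y^3 + 33648615*y^5 + 5742495*y^7 + 147456*y^9)"
definition padeQ8 :: "real \<Rightarrow> real" where "padeQ8 y = (34459425 + 72972900*y^2 + 51081030*y^4 + 13097700*y^6 + 893025*y^8)"
lemma padeQ8_pos: "0 < padeQ8 (y::real)"
  unfolding padeQ8_def by (intro add_pos_nonneg mult_nonneg_nonneg) simp_all

lemma pade8: fixes t::real assumes "0 \<le> t" shows "arctan t \<le> padeP8 t / padeQ8 t"
proof (rule pade_frame_up[OF assms, where k=18 and c="(-131681894400)" and P'="\<lambda>y. (34459425 + 184459275*y^2 + 168243075*y^4 + 40197465*y^6 + 1327104*y^8)" and Q'="\<lambda>y. (145945800*y + 204324120*y^3 + 78586200*y^5 + 7144200*y^7)"])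
  show "(padeP8 has_real_derivative (34459425 + 184459275*y^2 + 168243075*y^4 + 40197465*y^6 + 1327104*y^8)) (at y)" for y
    unfolding padeP8_def[abs_def] by (auto intro!: derivative_eq_intros)
  show "(padeQ8 has_real_derivative (145945800*y + 204324120*y^3 + 78586200*y^5 + 7144200*y^7)) (at y)" for y
    unfolding padeQ8_def[abs_def] by (auto intro!: derivative_eq_intros)
  show "0 < padeQ8 y" for y by (rule padeQ8_pos)
  show "padeP8 0 = 0" by (simp add: padeP8_def)
  show "(padeQ8 y)^2 - (1 + y^2) * ((34459425 + 184459275*y^2 + 168243075*y^4 + 40197465*y^6 + 1327104*y^8) * padeQ8 y - padeP8 y * (145945800*y + 204324120*y^3 + 78586200*y^5 + 7144200*y^7)) = (-131681894400) * y^18" for y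
    unfolding padeP8_def padeQ8_def by algebra
qed (simp)

definition padeP9 :: "real \<Rightarrow> real" where "padeP9 y = (654729075*y + 1332431100*y^3 + 891080190*y^5 + 216602100*y^7 + 13852575*y^9)"
definition padeQ9 :: "real \<Rightarrow> real" where "padeQ9 y = (654729075 + 1550674125*y^2 + 1277025750*y^4 + 425675250*y^6 + 49116375*y^8 + 893025*y^10)"
lemma padeQ9_pos: "0 < padeQ9 (y::real)"
  unfolding padeQ9_def by (intro add_pos_nonneg mult_nonneg_nonneg) simp_all

lemma pade9: fixes t::real assumes "0 \<le> t" shows "padeP9 t / padeQ9 t \<le> arctan t"
proof (rule pade_frame[OF assms, where k=20 and c="13168189440000" and P'="\<lambda>y. (654729075 + 3997293300*y^2 + 4455400950*y^4 + 1516214700*y^6 + 124673175*y^8)" and Q'="\<lambda>y. (3101348250*y + 5108103000*y^3 + 2554051500*y^5 + 392931000*y^7 + 8930250*y^9)"])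
  show "(padeP9 has_real_derivative (654729075 + 3997293300*y^2 + 4455400950*y^4 + 1516214700*y^6 + 124673175*y^8)) (at y)" for y
    unfolding padeP9_def[abs_def] by (auto intro!: derivative_eq_intros)
  show "(padeQ9 has_real_derivative (3101348250*y + 5108103000*y^3 + 2554051500*y^5 + 392931000*y^7 + 8930250*y^9)) (at y)" for y
    unfolding padeQ9_def[abs_def] by (auto intro!: derivative_eq_intros)
  show "0 < padeQ9 y" for y by (rule padeQ9_pos)
  show "padeP9 0 = 0" by (simp add: padeP9_def)
  show "(padeQ9 y)^2 - (1 + y^2) * ((654729075 + 3997293300*y^2 + 4455400950*y^4 + 1516214700*y^6 + 124673175*y^8) * padeQ9 y - padeP9 y * (3101348250*y + 5108103000*y^3 + 2554051500*y^5 + 392931000*y^7 + 8930250*y^9)) = 13168189440000 * y^20" for y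
    unfolding padeP9_def padeQ9_def by algebra
qed (simp)

definition pol_W9 :: "real \<Rightarrow> real" where "pol_W9 y = (28445699481343345564924120560000 + 180700512016252863453098520240000*y + 512430235041549648199283395488000*y^2 + 855962395437398313076355030688000*y^3 + 935900610509557009707171621840000*y^4 + 704037946712750567211245711760000*y^5 + 372324796529898061616320382400000*y^6 + 137939357148466807190308708800000*y^7 + 33996949606818773007403885200000*y^8 + 4411817774679285890387067600000*y^9 + (-208532290072986196909020000000)*y^10 + (-189658278539819072060220000000)*y^11 + (-29170168915934707975314000000)*y^12 + (-1675102873705529445450000000)*y^13 + (-25203713924705218560000000)*y^14)"
lemma pol_W9_p0: fixes s::real assumes s0: "0 \<le> s" and s1: "s \<le> 1" shows "0 < pol_W9 (0 + 4*s)"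
proof -
  have e: "pol_W9 (0 + 4*s) = 28445699481343345564924120560000 + 0*(1 - s) + 722802048065011453812394080960000*(s - s^2) + 8921685808729805825000928408768000*(s^2 - s^3) + 63703279116723297861887650372800000*(s^3 - s^4) + 303293835407169892346923585563840000*(s^4 - s^5) + 1024228692841026473171239194406080000*(s^5 - s^6) + 2549271059427488933551687480716480000*(s^6 - s^7) + 4809269486947969102557705365695680000*(s^7 - s^8) + 7037293576380444210370926386162880000*(s^8 - s^9) + 8193825135105970930820553835097280000*(s^9 - s^10) + 7975163180510399356410481279577280000*(s^10 - s^11) + 7179678704197722063192012292697280000*(s^11 - s^12) + 6690284479538599625593246646873280000*(s^12 - s^13) + 6577870228601086073990547178073280000*(s^13 - s^14) + 6571104658160814278980813914713280000*s^14" unfolding pol_W9_def by algebra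
  have w0: "0 \<le> 1 - s" using s1 by simp
  have w1: "0 \<le> s - s^2" using power_decreasing[of 1 2 s] s0 s1 by simp
  have w2: "0 \<le> s^2 - s^3" using power_decreasing[of 2 3 s] s0 s1 by simp
  have w3: "0 \<le> s^3 - s^4" using power_decreasing[of 3 4 s] s0 s1 by simp
  have w4: "0 \<le> s^4 - s^5" using power_decreasing[of 4 5 s] s0 s1 by simp
  have w5: "0 \<le> s^5 - s^6" using power_decreasing[of 5 6 s] s0 s1 by simp
  have w6: "0 \<le> s^6 - s^7" using power_decreasing[of 6 7 s] s0 s1 by simp
  have w7: "0 \<le> s^7 - s^8" using power_decreasing[of 7 8 s] s0 s1 by simp
  have w8: "0 \<le> s^8 - s^9" using power_decreasing[of 8 9 s] s0 s1 by simp
  have w9: "0 \<le> s^9 - s^10" using power_decreasing[of 9 10 s] s0 s1 by simp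
  have w10: "0 \<le> s^10 - s^11" using power_decreasing[of 10 11 s] s0 s1 by simp
  have w11: "0 \<le> s^11 - s^12" using power_decreasing[of 11 12 s] s0 s1 by simp
  have w12: "0 \<le> s^12 - s^13" using power_decreasing[of 12 13 s] s0 s1 by simp
  have w13: "0 \<le> s^13 - s^14" using power_decreasing[of 13 14 s] s0 s1 by simp
  have w14: "0 \<le> s^14" using s0 by simp
  show ?thesis unfolding e by (intro add_pos_nonneg mult_nonneg_nonneg) (use w0 w1 w2 w3 w4 w5 w6 w7 w8 w9 w10 w11 w12 w13 w14 in simp_all)
qed
lemma pol_W9_q0: fixes y::real assumes "0 \<le> y" "y \<le> 4" shows "0 < pol_W9 y"
  by (rule piece_helper[where f=pol_W9 and l="0" and w="4", OF pol_W9_p0]) (use assms in simp_all)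
lemma pos_W9: fixes y::real assumes "0 \<le> y" "y \<le> 4" shows "0 < pol_W9 y"
  using pol_W9_q0 assms by simp
definition pol_C1 :: "real \<Rightarrow> real" where "pol_C1 y = ((108/5) + (192/5)*y + (-12/5)*y^2)"
lemma pol_C1_p0: fixes s::real assumes s0: "0 \<le> s" and s1: "s \<le> 1" shows "0 < pol_C1 (0 + 4*s)"
proof -
  have e: "pol_C1 (0 + 4*s) = (108/5) + 0*(1 - s) + (768/5)*(s - s^2) + (576/5)*s^2" unfolding pol_C1_def by algebra
  have w0: "0 \<le> 1 - s" using s1 by simp
  have w1: "0 \<le> s - s^2" using power_decreasing[of 1 2 s] s0 s1 by simp
  have w2: "0 \<le> s^2" using s0 by simp
  show ?thesis unfolding e by (intro add_pos_nonneg mult_nonneg_nonneg) (use w0 w1 w2 in simp_all)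
qed
lemma pol_C1_q0: fixes y::real assumes "0 \<le> y" "y \<le> 4" shows "0 < pol_C1 y"
  by (rule piece_helper[where f=pol_C1 and l="0" and w="4", OF pol_C1_p0]) (use assms in simp_all)
lemma pos_C1: fixes y::real assumes "0 \<le> y" "y \<le> 4" shows "0 < pol_C1 y"
  using pol_C1_q0 assms by simp
definition pol_C2 :: "real \<Rightarrow> real" where "pol_C2 y = (54 + (54/5)*y + (-126/5)*y^2 + (58/5)*y^3)"
lemma pol_C2_p0: fixes s::real assumes s0: "0 \<le> s" and s1: "s \<le> 1" shows "0 < pol_C2 (0 + 1*s)"
proof -
  have e: "pol_C2 (0 + 1*s) = (198/5) + (72/5)*(1 - s) + (126/5)*(s - s^2) + 0*(s^2 - s^3) + (58/5)*s^3" unfolding pol_C2_def by algebra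
  have w0: "0 \<le> 1 - s" using s1 by simp
  have w1: "0 \<le> s - s^2" using power_decreasing[of 1 2 s] s0 s1 by simp
  have w2: "0 \<le> s^2 - s^3" using power_decreasing[of 2 3 s] s0 s1 by simp
  have w3: "0 \<le> s^3" using s0 by simp
  show ?thesis unfolding e by (intro add_pos_nonneg mult_nonneg_nonneg) (use w0 w1 w2 w3 in simp_all)
qed
lemma pol_C2_q0: fixes y::real assumes "0 \<le> y" "y \<le> 1" shows "0 < pol_C2 y"
  by (rule piece_helper[where f=pol_C2 and l="0" and w="1", OF pol_C2_p0]) (use assms in simp_all)
lemma pol_C2_p1: fixes s::real assumes s0: "0 \<le> s" and s1: "s \<le> 1" shows "0 < pol_C2 (1 + 1*s)"
proof -
  have e: "pol_C2 (1 + 1*s) = (232/5) + (24/5)*(1 - s) + 0*(s - s^2) + (48/5)*(s^2 - s^3) + (106/5)*s^3" unfolding pol_C2_def by algebra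
  have w0: "0 \<le> 1 - s" using s1 by simp
  have w1: "0 \<le> s - s^2" using power_decreasing[of 1 2 s] s0 s1 by simp
  have w2: "0 \<le> s^2 - s^3" using power_decreasing[of 2 3 s] s0 s1 by simp
  have w3: "0 \<le> s^3" using s0 by simp
  show ?thesis unfolding e by (intro add_pos_nonneg mult_nonneg_nonneg) (use w0 w1 w2 w3 in simp_all)
qed
lemma pol_C2_q1: fixes y::real assumes "1 \<le> y" "y \<le> 2" shows "0 < pol_C2 y"
  by (rule piece_helper[where f=pol_C2 and l="1" and w="1", OF pol_C2_p1]) (use assms in simp_all)
lemma pol_C2_p2: fixes s::real assumes s0: "0 \<le> s" and s1: "s \<le> 1" shows "0 < pol_C2 (2 + 2*s)"
proof -
  have e: "pol_C2 (2 + 2*s) = (338/5) + 0*(1 - s) + (492/5)*(s - s^2) + 276*(s^2 - s^3) + (1844/5)*s^3" unfolding pol_C2_def by algebra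
  have w0: "0 \<le> 1 - s" using s1 by simp
  have w1: "0 \<le> s - s^2" using power_decreasing[of 1 2 s] s0 s1 by simp
  have w2: "0 \<le> s^2 - s^3" using power_decreasing[of 2 3 s] s0 s1 by simp
  have w3: "0 \<le> s^3" using s0 by simp
  show ?thesis unfolding e by (intro add_pos_nonneg mult_nonneg_nonneg) (use w0 w1 w2 w3 in simp_all)
qed
lemma pol_C2_q2: fixes y::real assumes "2 \<le> y" "y \<le> 4" shows "0 < pol_C2 y"
  by (rule piece_helper[where f=pol_C2 and l="2" and w="2", OF pol_C2_p2]) (use assms in simp_all)
lemma pos_C2: fixes y::real assumes "0 \<le> y" "y \<le> 4" shows "0 < pol_C2 y"
proof -
  have c0: "0 < pol_C2 y" if "0 \<le> y" "y \<le> 1" using pol_C2_q0 that by blast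
  have c1: "0 < pol_C2 y" if "1 \<le> y" "y \<le> 2" using pol_C2_q1 that by blast
  have c2: "0 < pol_C2 y" if "2 \<le> y" "y \<le> 4" using pol_C2_q2 that by blast
  show ?thesis using assms c0 c1 c2 by linarith
qed
definition pol_C3 :: "real \<Rightarrow> real" where "pol_C3 y = (27 + (378/5)*y + (228/5)*y^2 + (-2)*y^3 + 1*y^4)"
lemma pol_C3_p0: fixes s::real assumes s0: "0 \<le> s" and s1: "s \<le> 1" shows "0 < pol_C3 (0 + 4*s)"
proof -
  have e: "pol_C3 (0 + 4*s) = 27 + 0*(1 - s) + (1512/5)*(s - s^2) + 1032*(s^2 - s^3) + 904*(s^3 - s^4) + 1160*s^4" unfolding pol_C3_def by algebra
  have w0: "0 \<le> 1 - s" using s1 by simp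
  have w1: "0 \<le> s - s^2" using power_decreasing[of 1 2 s] s0 s1 by simp
  have w2: "0 \<le> s^2 - s^3" using power_decreasing[of 2 3 s] s0 s1 by simp
  have w3: "0 \<le> s^3 - s^4" using power_decreasing[of 3 4 s] s0 s1 by simp
  have w4: "0 \<le> s^4" using s0 by simp
  show ?thesis unfolding e by (intro add_pos_nonneg mult_nonneg_nonneg) (use w0 w1 w2 w3 w4 in simp_all)
qed
lemma pol_C3_q0: fixes y::real assumes "0 \<le> y" "y \<le> 4" shows "0 < pol_C3 y"
  by (rule piece_helper[where f=pol_C3 and l="0" and w="4", OF pol_C3_p0]) (use assms in simp_all)
lemma pos_C3: fixes y::real assumes "0 \<le> y" "y \<le> 4" shows "0 < pol_C3 y"
  using pol_C3_q0 assms by simp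
definition pol_DN9 :: "real \<Rightarrow> real" where "pol_DN9 y = (1088686124826300 + 3197299250805660*y + 3644559320301900*y^2 + 2029657395437100*y^3 + 570076168533300*y^4 + 74535440908500*y^5 + 3622762786500*y^6 + (-1913984761500)*y^7)"
lemma pol_DN9_p0: fixes s::real assumes s0: "0 \<le> s" and s1: "s \<le> 1" shows "0 < pol_DN9 (0 + 4*s)"
proof -
  have e: "pol_DN9 (0 + 4*s) = 1088686124826300 + 0*(1 - s) + 12789197003222640*(s - s^2) + 71102146128053040*(s^2 - s^3) + 201000219436027440*(s^3 - s^4) + 346939718580552240*(s^4 - s^5) + 423264010070856240*(s^5 - s^6) + 438102846444360240*(s^6 - s^7) + 406744120111944240*s^7" unfolding pol_DN9_def by algebra
  have w0: "0 \<le> 1 - s" using s1 by simp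
  have w1: "0 \<le> s - s^2" using power_decreasing[of 1 2 s] s0 s1 by simp
  have w2: "0 \<le> s^2 - s^3" using power_decreasing[of 2 3 s] s0 s1 by simp
  have w3: "0 \<le> s^3 - s^4" using power_decreasing[of 3 4 s] s0 s1 by simp
  have w4: "0 \<le> s^4 - s^5" using power_decreasing[of 4 5 s] s0 s1 by simp
  have w5: "0 \<le> s^5 - s^6" using power_decreasing[of 5 6 s] s0 s1 by simp
  have w6: "0 \<le> s^6 - s^7" using power_decreasing[of 6 7 s] s0 s1 by simp
  have w7: "0 \<le> s^7" using s0 by simp
  show ?thesis unfolding e by (intro add_pos_nonneg mult_nonneg_nonneg) (use w0 w1 w2 w3 w4 w5 w6 w7 in simp_all)
qed
lemma pol_DN9_q0: fixes y::real assumes "0 \<le> y" "y \<le> 4" shows "0 < pol_DN9 y"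
  by (rule piece_helper[where f=pol_DN9 and l="0" and w="4", OF pol_DN9_p0]) (use assms in simp_all)
lemma pos_DN9: fixes y::real assumes "0 \<le> y" "y \<le> 4" shows "0 < pol_DN9 y"
  using pol_DN9_q0 assms by simp
definition pol_M8 :: "real \<Rightarrow> real" where "pol_M8 y = (36189012459600 + 78699813192000*y + 61119448996320*y^2 + 20215278008640*y^3 + 2661700566096*y^4 + (-651075895296)*y^5)"
lemma pol_M8_p0: fixes s::real assumes s0: "0 \<le> s" and s1: "s \<le> 1" shows "0 < pol_M8 (0 + 4*s)"
proof -
  have e: "pol_M8 (0 + 4*s) = 36189012459600 + 0*(1 - s) + 314799252768000*(s - s^2) + 1292710436709120*(s^2 - s^3) + 2586488229262080*(s^3 - s^4) + 3267883574182656*(s^4 - s^5) + 2601181857399552*s^5" unfolding pol_M8_def by algebra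
  have w0: "0 \<le> 1 - s" using s1 by simp
  have w1: "0 \<le> s - s^2" using power_decreasing[of 1 2 s] s0 s1 by simp
  have w2: "0 \<le> s^2 - s^3" using power_decreasing[of 2 3 s] s0 s1 by simp
  have w3: "0 \<le> s^3 - s^4" using power_decreasing[of 3 4 s] s0 s1 by simp
  have w4: "0 \<le> s^4 - s^5" using power_decreasing[of 4 5 s] s0 s1 by simp
  have w5: "0 \<le> s^5" using s0 by simp
  show ?thesis unfolding e by (intro add_pos_nonneg mult_nonneg_nonneg) (use w0 w1 w2 w3 w4 w5 in simp_all)
qed
lemma pol_M8_q0: fixes y::real assumes "0 \<le> y" "y \<le> 4" shows "0 < pol_M8 y"
  by (rule piece_helper[where f=pol_M8 and l="0" and w="4", OF pol_M8_p0]) (use assms in simp_all)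
lemma pos_M8: fixes y::real assumes "0 \<le> y" "y \<le> 4" shows "0 < pol_M8 y"
  using pol_M8_q0 assms by simp
definition pol_Wu :: "real \<Rightarrow> real" where "pol_Wu y = ((50968855125/9528128) + (-1122751125/22472)*y + (2292030000675/9528128)*y^2 + (-198467273357325/252495392)*y^3 + (18473254708545/9528128)*y^4 + (-962850629129805/252495392)*y^5 + (58820949627543/9528128)*y^6 + (-1059420766693041/126247696)*y^7 + (460604551931451/47640640)*y^8 + (-5989064602999647/631238480)*y^9 + (377532079813197/47640640)*y^10 + (-7076467525065693/1262476960)*y^11 + (158281207473879/47640640)*y^12 + (-2046068894654397/1262476960)*y^13 + (30071523533841/47640640)*y^14 + (-10459702407/56180)*y^15 + (9962028/265)*y^16 + (-19776/5)*y^17)"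
lemma pol_Wu_p0: fixes s::real assumes s0: "0 \<le> s" and s1: "s \<le> 1" shows "0 < pol_Wu (0 + (1/16)*s)"
proof -
  have e: "pol_Wu (0 + (1/16)*s) = (42431900625/19056256) + (1122751125/359552)*(1 - s) + 0*(s - s^2) + (2292030000675/2439200768)*(s^2 - s^3) + (773353446928875/1034221125632)*(s^3 - s^4) + (25726392801276885/33095076020224)*(s^4 - s^5) + (204848291781085275/264760608161792)*(s^5 - s^6) + (6558262847324988579/8472339461177344)*(s^6 - s^7) + (26231991968533261275/33889357844709376)*(s^7 - s^8) + (8394261841971895974903/10844594510307000320)*(s^8 - s^9) + (6715408275764596179993/8675675608245600256)*(s^9 - s^10) + (2148930668253871007697201/2776216194638592081920)*(s^10 - s^11) + (3438289067790900107302383/4441945911421747331072)*(s^11 - s^12) + (550126250854932921164496867/710711345827479572971520)*(s^12 - s^13) + (4401010006837417300421320539/5685690766619836583772160)*(s^13 - s^14) + (140832320218798947404229550821/181942104531834770680709120)*(s^14 - s^15) + (70416160109399459011462744779/90971052265917385340354560)*(s^15 - s^16) + (140832320218798918393704700197/181942104531834770680709120)*(s^16 - s^17) + (67154083356284579463609/86756756082456002560)*s^17" unfolding pol_Wu_def by algebra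
  have w0: "0 \<le> 1 - s" using s1 by simp
  have w1: "0 \<le> s - s^2" using power_decreasing[of 1 2 s] s0 s1 by simp
  have w2: "0 \<le> s^2 - s^3" using power_decreasing[of 2 3 s] s0 s1 by simp
  have w3: "0 \<le> s^3 - s^4" using power_decreasing[of 3 4 s] s0 s1 by simp
  have w4: "0 \<le> s^4 - s^5" using power_decreasing[of 4 5 s] s0 s1 by simp
  have w5: "0 \<le> s^5 - s^6" using power_decreasing[of 5 6 s] s0 s1 by simp
  have w6: "0 \<le> s^6 - s^7" using power_decreasing[of 6 7 s] s0 s1 by simp
  have w7: "0 \<le> s^7 - s^8" using power_decreasing[of 7 8 s] s0 s1 by simp
  have w8: "0 \<le> s^8 - s^9" using power_decreasing[of 8 9 s] s0 s1 by simp
  have w9: "0 \<le> s^9 - s^10" using power_decreasing[of 9 10 s] s0 s1 by simp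
  have w10: "0 \<le> s^10 - s^11" using power_decreasing[of 10 11 s] s0 s1 by simp
  have w11: "0 \<le> s^11 - s^12" using power_decreasing[of 11 12 s] s0 s1 by simp
  have w12: "0 \<le> s^12 - s^13" using power_decreasing[of 12 13 s] s0 s1 by simp
  have w13: "0 \<le> s^13 - s^14" using power_decreasing[of 13 14 s] s0 s1 by simp
  have w14: "0 \<le> s^14 - s^15" using power_decreasing[of 14 15 s] s0 s1 by simp
  have w15: "0 \<le> s^15 - s^16" using power_decreasing[of 15 16 s] s0 s1 by simp
  have w16: "0 \<le> s^16 - s^17" using power_decreasing[of 16 17 s] s0 s1 by simp
  have w17: "0 \<le> s^17" using s0 by simp
  show ?thesis unfolding e by (intro add_pos_nonneg mult_nonneg_nonneg) (use w0 w1 w2 w3 w4 w5 w6 w7 w8 w9 w10 w11 w12 w13 w14 w15 w16 w17 in simp_all)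
qed
lemma pol_Wu_q0: fixes y::real assumes "0 \<le> y" "y \<le> (1/16)" shows "0 < pol_Wu y"
  by (rule piece_helper[where f=pol_Wu and l="0" and w="(1/16)", OF pol_Wu_p0]) (use assms in simp_all)
lemma pol_Wu_p1: fixes s::real assumes s0: "0 \<le> s" and s1: "s \<le> 1" shows "0 < pol_Wu ((1/16) + (1/16)*s)"
proof -
  have e: "pol_Wu ((1/16) + (1/16)*s) = (14257117643155944457708281/11104864778554368327680) + (19065420133134789246433671/11104864778554368327680)*(1 - s) + 0*(s - s^2) + (144991296208368215242676535/284284538330991829188608)*(s^2 - s^3) + (73954154418596242258938831099/181942104531834770680709120)*(s^3 - s^4) + (76859299690034670370206104469/181942104531834770680709120)*(s^4 - s^5) + (38249977819929338619273031191/90971052265917385340354560)*(s^5 - s^6) + (38268348928536351265627238889/90971052265917385340354560)*(s^6 - s^7) + (76533522167691681197356787973/181942104531834770680709120)*(s^7 - s^8) + (15306751216390711281719605071/36388420906366954136141824)*(s^8 - s^9) + (19133435328887276334115859457/45485526132958692670177280)*(s^9 - s^10) + (3826687105686039182829363315/9097105226591738534035456)*(s^10 - s^11) + (76533742076955710547170932821/181942104531834770680709120)*(s^11 - s^12) + (76533742078384431505493901147/181942104531834770680709120)*(s^12 - s^13) + (7653374207833838716794105867/18194210453183477068070912)*(s^13 - s^14) + (38266871039169791537342421129/90971052265917385340354560)*(s^14 - s^15) + (15306748415667911858851715535/36388420906366954136141824)*(s^15 - s^16) + (76533742078339559623589091621/181942104531834770680709120)*(s^16 - s^17) + (2335624453074327381016569/5552432389277184163840)*s^17"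 unfolding pol_Wu_def by algebra
  have w0: "0 \<le> 1 - s" using s1 by simp
  have w1: "0 \<le> s - s^2" using power_decreasing[of 1 2 s] s0 s1 by simp
  have w2: "0 \<le> s^2 - s^3" using power_decreasing[of 2 3 s] s0 s1 by simp
  have w3: "0 \<le> s^3 - s^4" using power_decreasing[of 3 4 s] s0 s1 by simp
  have w4: "0 \<le> s^4 - s^5" using power_decreasing[of 4 5 s] s0 s1 by simp
  have w5: "0 \<le> s^5 - s^6" using power_decreasing[of 5 6 s] s0 s1 by simp
  have w6: "0 \<le> s^6 - s^7" using power_decreasing[of 6 7 s] s0 s1 by simp
  have w7: "0 \<le> s^7 - s^8" using power_decreasing[of 7 8 s] s0 s1 by simp
  have w8: "0 \<le> s^8 - s^9" using power_decreasing[of 8 9 s] s0 s1 by simp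
  have w9: "0 \<le> s^9 - s^10" using power_decreasing[of 9 10 s] s0 s1 by simp
  have w10: "0 \<le> s^10 - s^11" using power_decreasing[of 10 11 s] s0 s1 by simp
  have w11: "0 \<le> s^11 - s^12" using power_decreasing[of 11 12 s] s0 s1 by simp
  have w12: "0 \<le> s^12 - s^13" using power_decreasing[of 12 13 s] s0 s1 by simp
  have w13: "0 \<le> s^13 - s^14" using power_decreasing[of 13 14 s] s0 s1 by simp
  have w14: "0 \<le> s^14 - s^15" using power_decreasing[of 14 15 s] s0 s1 by simp
  have w15: "0 \<le> s^15 - s^16" using power_decreasing[of 15 16 s] s0 s1 by simp
  have w16: "0 \<le> s^16 - s^17" using power_decreasing[of 16 17 s] s0 s1 by simp
  have w17: "0 \<le> s^17" using s0 by simp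
  show ?thesis unfolding e by (intro add_pos_nonneg mult_nonneg_nonneg) (use w0 w1 w2 w3 w4 w5 w6 w7 w8 w9 w10 w11 w12 w13 w14 w15 w16 w17 in simp_all)
qed
lemma pol_Wu_q1: fixes y::real assumes "(1/16) \<le> y" "y \<le> (1/8)" shows "0 < pol_Wu y"
  by (rule piece_helper[where f=pol_Wu and l="(1/16)" and w="(1/16)", OF pol_Wu_p1]) (use assms in simp_all)
lemma pol_Wu_p2: fixes s::real assumes s0: "0 \<le> s" and s1: "s \<le> 1" shows "0 < pol_Wu ((1/8) + (1/16)*s)"
proof -
  have e: "pol_Wu ((1/8) + (1/16)*s) = (1670488013766703762156221/2220972955710873665536) + (5287963240235540204480157/5552432389277184163840)*(1 - s) + 0*(s - s^2) + (2470777881464172137634021/8883891822843494662144)*(s^2 - s^3) + (4934575255639090616311479/22209729557108736655360)*(s^3 - s^4) + (41003046127966489521016911/177677836456869893242880)*(s^4 - s^5) + (8162688060792946369979379/35535567291373978648576)*(s^5 - s^6) + (163331782653730563175014141/710711345827479572971520)*(s^6 - s^7) + (40831235447388670914059061/177677836456869893242880)*(s^7 - s^8) + (653301822150571062342382437/2842845383309918291886080)*(s^8 - s^9) + (653301688977275954983316703/2842845383309918291886080)*(s^9 - s^10) + (2613206785659794864786305119/11371381533239673167544320)*(s^10 - s^11) + (1306603392117159250369945281/5685690766619836583772160)*(s^11 - s^12) + (10452827137169458073979492957/45485526132958692670177280)*(s^12 - s^13) + (10452827137161553082572647777/45485526132958692670177280)*(s^13 - s^14) + (41811308548647089392354211751/181942104531834770680709120)*(s^14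 - s^15) + (1045282713716176763740664919/4548552613295869267017728)*(s^15 - s^16) + (41811308548647070837508414013/181942104531834770680709120)*(s^16 - s^17) + (5226413568580883854383781923/22742763066479346335088640)*s^17" unfolding pol_Wu_def by algebra
  have w0: "0 \<le> 1 - s" using s1 by simp
  have w1: "0 \<le> s - s^2" using power_decreasing[of 1 2 s] s0 s1 by simp
  have w2: "0 \<le> s^2 - s^3" using power_decreasing[of 2 3 s] s0 s1 by simp
  have w3: "0 \<le> s^3 - s^4" using power_decreasing[of 3 4 s] s0 s1 by simp
  have w4: "0 \<le> s^4 - s^5" using power_decreasing[of 4 5 s] s0 s1 by simp
  have w5: "0 \<le> s^5 - s^6" using power_decreasing[of 5 6 s] s0 s1 by simp
  have w6: "0 \<le> s^6 - s^7" using power_decreasing[of 6 7 s] s0 s1 by simp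
  have w7: "0 \<le> s^7 - s^8" using power_decreasing[of 7 8 s] s0 s1 by simp
  have w8: "0 \<le> s^8 - s^9" using power_decreasing[of 8 9 s] s0 s1 by simp
  have w9: "0 \<le> s^9 - s^10" using power_decreasing[of 9 10 s] s0 s1 by simp
  have w10: "0 \<le> s^10 - s^11" using power_decreasing[of 10 11 s] s0 s1 by simp
  have w11: "0 \<le> s^11 - s^12" using power_decreasing[of 11 12 s] s0 s1 by simp
  have w12: "0 \<le> s^12 - s^13" using power_decreasing[of 12 13 s] s0 s1 by simp
  have w13: "0 \<le> s^13 - s^14" using power_decreasing[of 13 14 s] s0 s1 by simp
  have w14: "0 \<le> s^14 - s^15" using power_decreasing[of 14 15 s] s0 s1 by simp
  have w15: "0 \<le> s^15 - s^16" using power_decreasing[of 15 16 s] s0 s1 by simp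
  have w16: "0 \<le> s^16 - s^17" using power_decreasing[of 16 17 s] s0 s1 by simp
  have w17: "0 \<le> s^17" using s0 by simp
  show ?thesis unfolding e by (intro add_pos_nonneg mult_nonneg_nonneg) (use w0 w1 w2 w3 w4 w5 w6 w7 w8 w9 w10 w11 w12 w13 w14 w15 w16 w17 in simp_all)
qed
lemma pol_Wu_q2: fixes y::real assumes "(1/8) \<le> y" "y \<le> (3/16)" shows "0 < pol_Wu y"
  by (rule piece_helper[where f=pol_Wu and l="(1/8)" and w="(1/16)", OF pol_Wu_p2]) (use assms in simp_all)
lemma pol_Wu_p3: fixes s::real assumes s0: "0 \<le> s" and s1: "s \<le> 1" shows "0 < pol_Wu ((3/16) + (1/16)*s)"
proof -
  have e: "pol_Wu ((3/16) + (1/16)*s) = (20360598215815974465887638347/45485526132958692670177280) + (24303823443287886291839331579/45485526132958692670177280)*(1 - s) + 0*(s - s^2) + (13886095020358393029617105697/90971052265917385340354560)*(s^2 - s^3) + (22250329173618846348097510533/181942104531834770680709120)*(s^3 - s^4) + (23089159604045616014267596881/181942104531834770680709120)*(s^4 - s^5) + (11492234490198952089392063643/90971052265917385340354560)*(s^5 - s^6) + (1149762023909280940171295061/9097105226591738534035456)*(s^6 - s^7) + (86770886116120784946426735/686573979365414228983808)*(s^7 - s^8) + (22994357711250301406776286199/181942104531834770680709120)*(s^8 - s^9) + (5748588219307323230351951991/45485526132958692670177280)*(s^9 - s^10) + (11497176577716703250829135501/90971052265917385340354560)*(s^10 - s^11) + (22994353141599020328026635899/181942104531834770680709120)*(s^11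 - s^12) + (22994353142188445123256871191/181942104531834770680709120)*(s^12 - s^13) + (11497176571083640475560365039/90971052265917385340354560)*(s^13 - s^14) + (1437147071385494266258770531/11371381533239673167544320)*(s^14 - s^15) + (22994353142167893691932216009/181942104531834770680709120)*(s^15 - s^16) + (22994353142167893938365336569/181942104531834770680709120)*(s^16 - s^17) + (1149717657108394696796358897/9097105226591738534035456)*s^17" unfolding pol_Wu_def by algebra
  have w0: "0 \<le> 1 - s" using s1 by simp
  have w1: "0 \<le> s - s^2" using power_decreasing[of 1 2 s] s0 s1 by simp
  have w2: "0 \<le> s^2 - s^3" using power_decreasing[of 2 3 s] s0 s1 by simp
  have w3: "0 \<le> s^3 - s^4" using power_decreasing[of 3 4 s] s0 s1 by simp
  have w4: "0 \<le> s^4 - s^5" using power_decreasing[of 4 5 s] s0 s1 by simp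
  have w5: "0 \<le> s^5 - s^6" using power_decreasing[of 5 6 s] s0 s1 by simp
  have w6: "0 \<le> s^6 - s^7" using power_decreasing[of 6 7 s] s0 s1 by simp
  have w7: "0 \<le> s^7 - s^8" using power_decreasing[of 7 8 s] s0 s1 by simp
  have w8: "0 \<le> s^8 - s^9" using power_decreasing[of 8 9 s] s0 s1 by simp
  have w9: "0 \<le> s^9 - s^10" using power_decreasing[of 9 10 s] s0 s1 by simp
  have w10: "0 \<le> s^10 - s^11" using power_decreasing[of 10 11 s] s0 s1 by simp
  have w11: "0 \<le> s^11 - s^12" using power_decreasing[of 11 12 s] s0 s1 by simp
  have w12: "0 \<le> s^12 - s^13" using power_decreasing[of 12 13 s] s0 s1 by simp
  have w13: "0 \<le> s^13 - s^14" using power_decreasing[of 13 14 s] s0 s1 by simp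
  have w14: "0 \<le> s^14 - s^15" using power_decreasing[of 14 15 s] s0 s1 by simp
  have w15: "0 \<le> s^15 - s^16" using power_decreasing[of 15 16 s] s0 s1 by simp
  have w16: "0 \<le> s^16 - s^17" using power_decreasing[of 16 17 s] s0 s1 by simp
  have w17: "0 \<le> s^17" using s0 by simp
  show ?thesis unfolding e by (intro add_pos_nonneg mult_nonneg_nonneg) (use w0 w1 w2 w3 w4 w5 w6 w7 w8 w9 w10 w11 w12 w13 w14 w15 w16 w17 in simp_all)
qed
lemma pol_Wu_q3: fixes y::real assumes "(3/16) \<le> y" "y \<le> (1/4)" shows "0 < pol_Wu y"
  by (rule piece_helper[where f=pol_Wu and l="(3/16)" and w="(1/16)", OF pol_Wu_p3]) (use assms in simp_all)
lemma pol_Wu_p4: fixes s::real assumes s0: "0 \<le> s" and s1: "s \<le> 1" shows "0 < pol_Wu ((1/4) + (1/16)*s)"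
proof -
  have e: "pol_Wu ((1/4) + (1/16)*s) = (365753471516268111807/1355574313788375040) + (412360921877664110019/1355574313788375040)*(1 - s) + 0*(s - s^2) + (914100775174674762843/10844594510307000320)*(s^2 - s^3) + (733632430432133076957/10844594510307000320)*(s^3 - s^4) + (12165411854823769757193/173513512164912005120)*(s^4 - s^5) + (24222880163885771620809/347027024329824010240)*(s^5 - s^6) + (193871074041509311401987/2776216194638592081920)*(s^6 - s^7) + (12116448785548826042109/173513512164912005120)*(s^7 - s^8) + (3101820627167093333658891/44419459114217473310720)*(s^8 - s^9) + (6203639937369185856577089/88838918228434946621440)*(s^9 - s^10) + (49629120121848263975031921/710711345827479572971520)*(s^10 - s^11) + (49629120089806885329687681/710711345827479572971520)*(s^11 - s^12) + (158813184291946790111331807/2274276306647934633508864)*(s^12 - s^13) + (1588131842917745487615368343/22742763066479346335088640)*(s^13 - s^14) + (12705054743342400600847457337/181942104531834770680709120)*(s^14 - s^15) + (6352527371671194821989850133/90971052265917385340354560)*(s^15 - s^16) + (12705054743342389848964124133/181942104531834770680709120)*(s^16 - s^17) + (198516480364724841351968211/2842845383309918291886080)*s^17" unfolding pol_Wu_def by algebra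
  have w0: "0 \<le> 1 - s" using s1 by simp
  have w1: "0 \<le> s - s^2" using power_decreasing[of 1 2 s] s0 s1 by simp
  have w2: "0 \<le> s^2 - s^3" using power_decreasing[of 2 3 s] s0 s1 by simp
  have w3: "0 \<le> s^3 - s^4" using power_decreasing[of 3 4 s] s0 s1 by simp
  have w4: "0 \<le> s^4 - s^5" using power_decreasing[of 4 5 s] s0 s1 by simp
  have w5: "0 \<le> s^5 - s^6" using power_decreasing[of 5 6 s] s0 s1 by simp
  have w6: "0 \<le> s^6 - s^7" using power_decreasing[of 6 7 s] s0 s1 by simp
  have w7: "0 \<le> s^7 - s^8" using power_decreasing[of 7 8 s] s0 s1 by simp
  have w8: "0 \<le> s^8 - s^9" using power_decreasing[of 8 9 s] s0 s1 by simp
  have w9: "0 \<le> s^9 - s^10" using power_decreasing[of 9 10 s] s0 s1 by simp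
  have w10: "0 \<le> s^10 - s^11" using power_decreasing[of 10 11 s] s0 s1 by simp
  have w11: "0 \<le> s^11 - s^12" using power_decreasing[of 11 12 s] s0 s1 by simp
  have w12: "0 \<le> s^12 - s^13" using power_decreasing[of 12 13 s] s0 s1 by simp
  have w13: "0 \<le> s^13 - s^14" using power_decreasing[of 13 14 s] s0 s1 by simp
  have w14: "0 \<le> s^14 - s^15" using power_decreasing[of 14 15 s] s0 s1 by simp
  have w15: "0 \<le> s^15 - s^16" using power_decreasing[of 15 16 s] s0 s1 by simp
  have w16: "0 \<le> s^16 - s^17" using power_decreasing[of 16 17 s] s0 s1 by simp
  have w17: "0 \<le> s^17" using s0 by simp
  show ?thesis unfolding e by (intro add_pos_nonneg mult_nonneg_nonneg) (use w0 w1 w2 w3 w4 w5 w6 w7 w8 w9 w10 w11 w12 w13 w14 w15 w16 w17 in simp_all)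
qed
lemma pol_Wu_q4: fixes y::real assumes "(1/4) \<le> y" "y \<le> (5/16)" shows "0 < pol_Wu y"
  by (rule piece_helper[where f=pol_Wu and l="(1/4)" and w="(1/16)", OF pol_Wu_p4]) (use assms in simp_all)
lemma pol_Wu_p5: fixes s::real assumes s0: "0 \<le> s" and s1: "s \<le> 1" shows "0 < pol_Wu ((5/16) + (1/16)*s)"
proof -
  have e: "pol_Wu ((5/16) + (1/16)*s) = (369736148573021202741959625/2274276306647934633508864) + (402709535156586432909433875/2274276306647934633508864)*(1 - s) + 0*(s - s^2) + (422592977181367195192519725/9097105226591738534035456)*(s^2 - s^3) + (1349934039099832307151369075/36388420906366954136141824)*(s^3 - s^4) + (1397133798179631162358476585/36388420906366954136141824)*(s^4 - s^5) + (695475842960071806335731935/18194210453183477068070912)*(s^5 - s^6) + (695782688774428203620515467/18194210453183477068070912)*(s^6 - s^7) + (1391509655273257161661209069/36388420906366954136141824)*(s^7 - s^8) + (6957569875782049177366120683/181942104531834770680709120)*(s^8 - s^9) + (347878419670749224149061121/9097105226591738534035456)*(s^9 - s^10) + (869696060401798447958496627/22742763066479346335088640)*(s^10 - s^11) + (1391513695692808649432581821/36388420906366954136141824)*(s^11 - s^12) + (6957568478685205110509474067/181942104531834770680709120)*(s^12 - s^13) + (3478784239338249059407180299/90971052265917385340354560)*(s^13 - s^14) + (3478784239338396702952755723/90971052265917385340354560)*(s^14 - s^15) + (6957568478676785397198962703/181942104531834770680709120)*(s^15 - s^16) + (6957568478676785560734689877/181942104531834770680709120)*(s^16 - s^17)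 + (434848029917299097393533203/11371381533239673167544320)*s^17" unfolding pol_Wu_def by algebra
  have w0: "0 \<le> 1 - s" using s1 by simp
  have w1: "0 \<le> s - s^2" using power_decreasing[of 1 2 s] s0 s1 by simp
  have w2: "0 \<le> s^2 - s^3" using power_decreasing[of 2 3 s] s0 s1 by simp
  have w3: "0 \<le> s^3 - s^4" using power_decreasing[of 3 4 s] s0 s1 by simp
  have w4: "0 \<le> s^4 - s^5" using power_decreasing[of 4 5 s] s0 s1 by simp
  have w5: "0 \<le> s^5 - s^6" using power_decreasing[of 5 6 s] s0 s1 by simp
  have w6: "0 \<le> s^6 - s^7" using power_decreasing[of 6 7 s] s0 s1 by simp
  have w7: "0 \<le> s^7 - s^8" using power_decreasing[of 7 8 s] s0 s1 by simp
  have w8: "0 \<le> s^8 - s^9" using power_decreasing[of 8 9 s] s0 s1 by simp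
  have w9: "0 \<le> s^9 - s^10" using power_decreasing[of 9 10 s] s0 s1 by simp
  have w10: "0 \<le> s^10 - s^11" using power_decreasing[of 10 11 s] s0 s1 by simp
  have w11: "0 \<le> s^11 - s^12" using power_decreasing[of 11 12 s] s0 s1 by simp
  have w12: "0 \<le> s^12 - s^13" using power_decreasing[of 12 13 s] s0 s1 by simp
  have w13: "0 \<le> s^13 - s^14" using power_decreasing[of 13 14 s] s0 s1 by simp
  have w14: "0 \<le> s^14 - s^15" using power_decreasing[of 14 15 s] s0 s1 by simp
  have w15: "0 \<le> s^15 - s^16" using power_decreasing[of 15 16 s] s0 s1 by simp
  have w16: "0 \<le> s^16 - s^17" using power_decreasing[of 16 17 s] s0 s1 by simp
  have w17: "0 \<le> s^17" using s0 by simp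
  show ?thesis unfolding e by (intro add_pos_nonneg mult_nonneg_nonneg) (use w0 w1 w2 w3 w4 w5 w6 w7 w8 w9 w10 w11 w12 w13 w14 w15 w16 w17 in simp_all)
qed
lemma pol_Wu_q5: fixes y::real assumes "(5/16) \<le> y" "y \<le> (3/8)" shows "0 < pol_Wu y"
  by (rule piece_helper[where f=pol_Wu and l="(5/16)" and w="(1/16)", OF pol_Wu_p5]) (use assms in simp_all)
lemma pol_Wu_p6: fixes s::real assumes s0: "0 \<le> s" and s1: "s \<le> 1" shows "0 < pol_Wu ((3/8) + (1/16)*s)"
proof -
  have e: "pol_Wu ((3/8) + (1/16)*s) = (1032892562347011864766251/11104864778554368327680) + (299279001205826406636399/2776216194638592081920)*(1 - s) + 0*(s - s^2) + (219380366403943226058537/8883891822843494662144)*(s^2 - s^3) + (424599972647436239400927/22209729557108736655360)*(s^3 - s^4) + (3513073255285219612390971/177677836456869893242880)*(s^4 - s^5) + (3496171631233688061293853/177677836456869893242880)*(s^5 - s^6) + (13990996277987115616642953/710711345827479572971520)*(s^6 - s^7) + (1748801384470671427533141/88838918228434946621440)*(s^7 - s^8) + (11192365155565377490462533/568569076661983658377216)*(s^8 - s^9) + (55961813236280503643443797/2842845383309918291886080)*(s^9 - s^10) + (44769451213085567470657527/2274276306647934633508864)*(s^10 - s^11) + (111923627949016713601013913/5685690766619836583772160)*(s^11 - s^12) + (895389023625003879513861153/45485526132958692670177280)*(s^12 - s^13) + (179077804724734370431925271/9097105226591738534035456)*(s^13 - s^14) + (3581556094494880531470818283/181942104531834770680709120)*(s^14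 - s^15) + (179077804724743740387316539/9097105226591738534035456)*(s^15 - s^16) + (3581556094494874929833361261/181942104531834770680709120)*(s^16 - s^17) + (447694511811859365924400329/22742763066479346335088640)*s^17" unfolding pol_Wu_def by algebra
  have w0: "0 \<le> 1 - s" using s1 by simp
  have w1: "0 \<le> s - s^2" using power_decreasing[of 1 2 s] s0 s1 by simp
  have w2: "0 \<le> s^2 - s^3" using power_decreasing[of 2 3 s] s0 s1 by simp
  have w3: "0 \<le> s^3 - s^4" using power_decreasing[of 3 4 s] s0 s1 by simp
  have w4: "0 \<le> s^4 - s^5" using power_decreasing[of 4 5 s] s0 s1 by simp
  have w5: "0 \<le> s^5 - s^6" using power_decreasing[of 5 6 s] s0 s1 by simp
  have w6: "0 \<le> s^6 - s^7" using power_decreasing[of 6 7 s] s0 s1 by simp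
  have w7: "0 \<le> s^7 - s^8" using power_decreasing[of 7 8 s] s0 s1 by simp
  have w8: "0 \<le> s^8 - s^9" using power_decreasing[of 8 9 s] s0 s1 by simp
  have w9: "0 \<le> s^9 - s^10" using power_decreasing[of 9 10 s] s0 s1 by simp
  have w10: "0 \<le> s^10 - s^11" using power_decreasing[of 10 11 s] s0 s1 by simp
  have w11: "0 \<le> s^11 - s^12" using power_decreasing[of 11 12 s] s0 s1 by simp
  have w12: "0 \<le> s^12 - s^13" using power_decreasing[of 12 13 s] s0 s1 by simp
  have w13: "0 \<le> s^13 - s^14" using power_decreasing[of 13 14 s] s0 s1 by simp
  have w14: "0 \<le> s^14 - s^15" using power_decreasing[of 14 15 s] s0 s1 by simp
  have w15: "0 \<le> s^15 - s^16" using power_decreasing[of 15 16 s] s0 s1 by simp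
  have w16: "0 \<le> s^16 - s^17" using power_decreasing[of 16 17 s] s0 s1 by simp
  have w17: "0 \<le> s^17" using s0 by simp
  show ?thesis unfolding e by (intro add_pos_nonneg mult_nonneg_nonneg) (use w0 w1 w2 w3 w4 w5 w6 w7 w8 w9 w10 w11 w12 w13 w14 w15 w16 w17 in simp_all)
qed
lemma pol_Wu_q6: fixes y::real assumes "(3/8) \<le> y" "y \<le> (7/16)" shows "0 < pol_Wu y"
  by (rule piece_helper[where f=pol_Wu and l="(3/8)" and w="(1/16)", OF pol_Wu_p6]) (use assms in simp_all)
lemma pol_Wu_p7: fixes s::real assumes s0: "0 \<le> s" and s1: "s \<le> 1" shows "0 < pol_Wu ((7/16) + (1/16)*s)"
proof -
  have e: "pol_Wu ((7/16) + (1/16)*s) = (361571366617100607960498867/9097105226591738534035456) + (3318260125911576290128870419/45485526132958692670177280)*(1 - s) + 0*(s - s^2) + (201184253372174038703933655/18194210453183477068070912)*(s^2 - s^3) + (1328090207808886593281956233/181942104531834770680709120)*(s^3 - s^4) + (1380325503726658680542693529/181942104531834770680709120)*(s^4 - s^5) + (137012468611036796408974995/18194210453183477068070912)*(s^5 - s^6) + (10710612810016374981084207/1421422691654959145943040)*(s^6 - s^7) + (1370877850032020720653610499/181942104531834770680709120)*(s^7 - s^8) + (1370884103955527826616772583/181942104531834770680709120)*(s^8 - s^9) + (342720919678471008908425083/45485526132958692670177280)*(s^9 - s^10) + (685441853254152326348901867/90971052265917385340354560)*(s^10 - s^11) + (1370883705055156678166771607/181942104531834770680709120)*(s^11 - s^12)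 + (1370883705132548932738097343/181942104531834770680709120)*(s^12 - s^13) + (685441852564693058910941379/90971052265917385340354560)*(s^13 - s^14) + (342720926282376594320668269/45485526132958692670177280)*(s^14 - s^15) + (274176741025900455072219945/36388420906366954136141824)*(s^15 - s^16) + (1370883705129502355999433513/181942104531834770680709120)*(s^16 - s^17) + (342720926282375588390318721/45485526132958692670177280)*s^17" unfolding pol_Wu_def by algebra
  have w0: "0 \<le> 1 - s" using s1 by simp
  have w1: "0 \<le> s - s^2" using power_decreasing[of 1 2 s] s0 s1 by simp
  have w2: "0 \<le> s^2 - s^3" using power_decreasing[of 2 3 s] s0 s1 by simp
  have w3: "0 \<le> s^3 - s^4" using power_decreasing[of 3 4 s] s0 s1 by simp
  have w4: "0 \<le> s^4 - s^5" using power_decreasing[of 4 5 s] s0 s1 by simp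
  have w5: "0 \<le> s^5 - s^6" using power_decreasing[of 5 6 s] s0 s1 by simp
  have w6: "0 \<le> s^6 - s^7" using power_decreasing[of 6 7 s] s0 s1 by simp
  have w7: "0 \<le> s^7 - s^8" using power_decreasing[of 7 8 s] s0 s1 by simp
  have w8: "0 \<le> s^8 - s^9" using power_decreasing[of 8 9 s] s0 s1 by simp
  have w9: "0 \<le> s^9 - s^10" using power_decreasing[of 9 10 s] s0 s1 by simp
  have w10: "0 \<le> s^10 - s^11" using power_decreasing[of 10 11 s] s0 s1 by simp
  have w11: "0 \<le> s^11 - s^12" using power_decreasing[of 11 12 s] s0 s1 by simp
  have w12: "0 \<le> s^12 - s^13" using power_decreasing[of 12 13 s] s0 s1 by simp
  have w13: "0 \<le> s^13 - s^14" using power_decreasing[of 13 14 s] s0 s1 by simp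
  have w14: "0 \<le> s^14 - s^15" using power_decreasing[of 14 15 s] s0 s1 by simp
  have w15: "0 \<le> s^15 - s^16" using power_decreasing[of 15 16 s] s0 s1 by simp
  have w16: "0 \<le> s^16 - s^17" using power_decreasing[of 16 17 s] s0 s1 by simp
  have w17: "0 \<le> s^17" using s0 by simp
  show ?thesis unfolding e by (intro add_pos_nonneg mult_nonneg_nonneg) (use w0 w1 w2 w3 w4 w5 w6 w7 w8 w9 w10 w11 w12 w13 w14 w15 w16 w17 in simp_all)
qed
lemma pol_Wu_q7: fixes y::real assumes "(7/16) \<le> y" "y \<le> (1/2)" shows "0 < pol_Wu y"
  by (rule piece_helper[where f=pol_Wu and l="(7/16)" and w="(1/16)", OF pol_Wu_p7]) (use assms in simp_all)
lemma pos_Wu: fixes y::real assumes "0 \<le> y" "y \<le> (1/2)" shows "0 < pol_Wu y"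
proof -
  have c0: "0 < pol_Wu y" if "0 \<le> y" "y \<le> (1/16)" using pol_Wu_q0 that by blast
  have c1: "0 < pol_Wu y" if "(1/16) \<le> y" "y \<le> (1/8)" using pol_Wu_q1 that by blast
  have c2: "0 < pol_Wu y" if "(1/8) \<le> y" "y \<le> (3/16)" using pol_Wu_q2 that by blast
  have c3: "0 < pol_Wu y" if "(3/16) \<le> y" "y \<le> (1/4)" using pol_Wu_q3 that by blast
  have c4: "0 < pol_Wu y" if "(1/4) \<le> y" "y \<le> (5/16)" using pol_Wu_q4 that by blast
  have c5: "0 < pol_Wu y" if "(5/16) \<le> y" "y \<le> (3/8)" using pol_Wu_q5 that by blast
  have c6: "0 < pol_Wu y" if "(3/8) \<le> y" "y \<le> (7/16)" using pol_Wu_q6 that by blast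
  have c7: "0 < pol_Wu y" if "(7/16) \<le> y" "y \<le> (1/2)" using pol_Wu_q7 that by blast
  show ?thesis using assms c0 c1 c2 c3 c4 c5 c6 c7 by linarith
qed
definition pol_Cu1 :: "real \<Rightarrow> real" where "pol_Cu1 y = ((1124007/224720) + (-333/265)*y + (-4900931/224720)*y^2 + (37148814/744385)*y^3 + (-2800431/44944)*y^4 + (77103819/1488770)*y^5 + (-7123281/224720)*y^6 + (2997/530)*y^7 + (39/5)*y^8)"
lemma pol_Cu1_p0: fixes s::real assumes s0: "0 \<le> s" and s1: "s \<le> 1" shows "0 < pol_Cu1 (0 + (1/4)*s)"
proof -
  have e: "pol_Cu1 (0 + (1/4)*s) = (2390729/719104) + (6030467/3595520)*(1 - s) + (4900931/3595520)*(s - s^2) + 0*(s^2 - s^3) + (18574407/23820320)*(s^3 - s^4) + (1635409881/3049000960)*(s^4 - s^5) + (1789617519/3049000960)*(s^5 - s^6) + (28256346411/48784015360)*(s^6 - s^7) + (28273183557/48784015360)*(s^7 - s^8) + (88371843/152450048)*s^8" unfolding pol_Cu1_def by algebra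
  have w0: "0 \<le> 1 - s" using s1 by simp
  have w1: "0 \<le> s - s^2" using power_decreasing[of 1 2 s] s0 s1 by simp
  have w2: "0 \<le> s^2 - s^3" using power_decreasing[of 2 3 s] s0 s1 by simp
  have w3: "0 \<le> s^3 - s^4" using power_decreasing[of 3 4 s] s0 s1 by simp
  have w4: "0 \<le> s^4 - s^5" using power_decreasing[of 4 5 s] s0 s1 by simp
  have w5: "0 \<le> s^5 - s^6" using power_decreasing[of 5 6 s] s0 s1 by simp
  have w6: "0 \<le> s^6 - s^7" using power_decreasing[of 6 7 s] s0 s1 by simp
  have w7: "0 \<le> s^7 - s^8" using power_decreasing[of 7 8 s] s0 s1 by simp
  have w8: "0 \<le> s^8" using s0 by simp
  show ?thesis unfolding e by (intro add_pos_nonneg mult_nonneg_nonneg) (use w0 w1 w2 w3 w4 w5 w6 w7 w8 in simp_all)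
qed
lemma pol_Cu1_q0: fixes y::real assumes "0 \<le> y" "y \<le> (1/4)" shows "0 < pol_Cu1 y"
  by (rule piece_helper[where f=pol_Cu1 and l="0" and w="(1/4)", OF pol_Cu1_p0]) (use assms in simp_all)
lemma pol_Cu1_p1: fixes s::real assumes s0: "0 \<le> s" and s1: "s \<le> 1" shows "0 < pol_Cu1 ((1/4) + (1/4)*s)"
proof -
  have e: "pol_Cu1 ((1/4) + (1/4)*s) = (114919128827/48784015360) + (75546916293/48784015360)*(1 - s) + (818254481/9756803072)*(s - s^2) + 0*(s^2 - s^3) + (4291033737/24392007680)*(s^3 - s^4) + (4377576999/48784015360)*(s^4 - s^5) + (5258423283/48784015360)*(s^5 - s^6) + (645165387/6098001920)*(s^6 - s^7) + (2612304933/24392007680)*(s^7 - s^8) + (5230416069/48784015360)*s^8" unfolding pol_Cu1_def by algebra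
  have w0: "0 \<le> 1 - s" using s1 by simp
  have w1: "0 \<le> s - s^2" using power_decreasing[of 1 2 s] s0 s1 by simp
  have w2: "0 \<le> s^2 - s^3" using power_decreasing[of 2 3 s] s0 s1 by simp
  have w3: "0 \<le> s^3 - s^4" using power_decreasing[of 3 4 s] s0 s1 by simp
  have w4: "0 \<le> s^4 - s^5" using power_decreasing[of 4 5 s] s0 s1 by simp
  have w5: "0 \<le> s^5 - s^6" using power_decreasing[of 5 6 s] s0 s1 by simp
  have w6: "0 \<le> s^6 - s^7" using power_decreasing[of 6 7 s] s0 s1 by simp
  have w7: "0 \<le> s^7 - s^8" using power_decreasing[of 7 8 s] s0 s1 by simp
  have w8: "0 \<le> s^8" using s0 by simp
  show ?thesis unfolding e by (intro add_pos_nonneg mult_nonneg_nonneg) (use w0 w1 w2 w3 w4 w5 w6 w7 w8 in simp_all)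
qed
lemma pol_Cu1_q1: fixes y::real assumes "(1/4) \<le> y" "y \<le> (1/2)" shows "0 < pol_Cu1 y"
  by (rule piece_helper[where f=pol_Cu1 and l="(1/4)" and w="(1/4)", OF pol_Cu1_p1]) (use assms in simp_all)
lemma pos_Cu1: fixes y::real assumes "0 \<le> y" "y \<le> (1/2)" shows "0 < pol_Cu1 y"
proof -
  have c0: "0 < pol_Cu1 y" if "0 \<le> y" "y \<le> (1/4)" using pol_Cu1_q0 that by blast
  have c1: "0 < pol_Cu1 y" if "(1/4) \<le> y" "y \<le> (1/2)" using pol_Cu1_q1 that by blast
  show ?thesis using assms c0 c1 by linarith
qed
definition pol_Cu2 :: "real \<Rightarrow> real" where "pol_Cu2 y = ((999/212) + (-2/5)*y + (-4995/212)*y^2 + (177690/2809)*y^3 + (-80919/1060)*y^4 + (896877/14045)*y^5 + (-50949/1060)*y^6 + (9/5)*y^7)"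
lemma pol_Cu2_p0: fixes s::real assumes s0: "0 \<le> s" and s1: "s \<le> 1" shows "0 < pol_Cu2 (0 + (1/4)*s)"
proof -
  have e: "pol_Cu2 (0 + (1/4)*s) = (53249/16960) + (26671/16960)*(1 - s) + (4995/3392)*(s - s^2) + 0*(s^2 - s^3) + (88845/89888)*(s^3 - s^4) + (9926493/14382080)*(s^4 - s^5) + (1082337/1438208)*(s^5 - s^6) + (170473623/230113280)*(s^6 - s^7) + (21312363/28764160)*s^7" unfolding pol_Cu2_def by algebra
  have w0: "0 \<le> 1 - s" using s1 by simp
  have w1: "0 \<le> s - s^2" using power_decreasing[of 1 2 s] s0 s1 by simp
  have w2: "0 \<le> s^2 - s^3" using power_decreasing[of 2 3 s] s0 s1 by simp
  have w3: "0 \<le> s^3 - s^4" using power_decreasing[of 3 4 s] s0 s1 by simp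
  have w4: "0 \<le> s^4 - s^5" using power_decreasing[of 4 5 s] s0 s1 by simp
  have w5: "0 \<le> s^5 - s^6" using power_decreasing[of 5 6 s] s0 s1 by simp
  have w6: "0 \<le> s^6 - s^7" using power_decreasing[of 6 7 s] s0 s1 by simp
  have w7: "0 \<le> s^7" using s0 by simp
  show ?thesis unfolding e by (intro add_pos_nonneg mult_nonneg_nonneg) (use w0 w1 w2 w3 w4 w5 w6 w7 in simp_all)
qed
lemma pol_Cu2_q0: fixes y::real assumes "0 \<le> y" "y \<le> (1/4)" shows "0 < pol_Cu2 y"
  by (rule piece_helper[where f=pol_Cu2 and l="0" and w="(1/4)", OF pol_Cu2_p0]) (use assms in simp_all)
lemma pol_Cu2_p1: fixes s::real assumes s0: "0 \<le> s" and s1: "s \<le> 1" shows "0 < pol_Cu2 ((1/4) + (1/4)*s)"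
proof -
  have e: "pol_Cu2 ((1/4) + (1/4)*s) = (131165221/46022656) + (4474627/4341760)*(1 - s) + 0*(s - s^2) + (17639847/115056640)*(s^2 - s^3) + (78624861/230113280)*(s^3 - s^4) + (42136089/230113280)*(s^4 - s^5) + (1020381/5752832)*(s^5 - s^6) + (3829191/23011328)*(s^6 - s^7) + (38317191/230113280)*s^7" unfolding pol_Cu2_def by algebra
  have w0: "0 \<le> 1 - s" using s1 by simp
  have w1: "0 \<le> s - s^2" using power_decreasing[of 1 2 s] s0 s1 by simp
  have w2: "0 \<le> s^2 - s^3" using power_decreasing[of 2 3 s] s0 s1 by simp
  have w3: "0 \<le> s^3 - s^4" using power_decreasing[of 3 4 s] s0 s1 by simp
  have w4: "0 \<le> s^4 - s^5" using power_decreasing[of 4 5 s] s0 s1 by simp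
  have w5: "0 \<le> s^5 - s^6" using power_decreasing[of 5 6 s] s0 s1 by simp
  have w6: "0 \<le> s^6 - s^7" using power_decreasing[of 6 7 s] s0 s1 by simp
  have w7: "0 \<le> s^7" using s0 by simp
  show ?thesis unfolding e by (intro add_pos_nonneg mult_nonneg_nonneg) (use w0 w1 w2 w3 w4 w5 w6 w7 in simp_all)
qed
lemma pol_Cu2_q1: fixes y::real assumes "(1/4) \<le> y" "y \<le> (1/2)" shows "0 < pol_Cu2 y"
  by (rule piece_helper[where f=pol_Cu2 and l="(1/4)" and w="(1/4)", OF pol_Cu2_p1]) (use assms in simp_all)
lemma pos_Cu2: fixes y::real assumes "0 \<le> y" "y \<le> (1/2)" shows "0 < pol_Cu2 y"
proof -
  have c0: "0 < pol_Cu2 y" if "0 \<le> y" "y \<le> (1/4)" using pol_Cu2_q0 that by blast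
  have c1: "0 < pol_Cu2 y" if "(1/4) \<le> y" "y \<le> (1/2)" using pol_Cu2_q1 that by blast
  show ?thesis using assms c0 c1 by linarith
qed
definition pol_Cu3 :: "real \<Rightarrow> real" where "pol_Cu3 y = (1 + (-5)*y^2 + (7992/265)*y^3 + (-81/5)*y^4 + (7992/265)*y^5 + (-51/5)*y^6)"
lemma pol_Cu3_p0: fixes s::real assumes s0: "0 \<le> s" and s1: "s \<le> 1" shows "0 < pol_Cu3 (0 + (1/4)*s)"
proof -
  have e: "pol_Cu3 (0 + (1/4)*s) = (11/16) + (5/16)*(1 - s) + (5/16)*(s - s^2) + 0*(s^2 - s^3) + (999/2120)*(s^3 - s^4) + (5535/13568)*(s^4 - s^5) + (29673/67840)*(s^5 - s^6) + (94413/217088)*s^6" unfolding pol_Cu3_def by algebra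
  have w0: "0 \<le> 1 - s" using s1 by simp
  have w1: "0 \<le> s - s^2" using power_decreasing[of 1 2 s] s0 s1 by simp
  have w2: "0 \<le> s^2 - s^3" using power_decreasing[of 2 3 s] s0 s1 by simp
  have w3: "0 \<le> s^3 - s^4" using power_decreasing[of 3 4 s] s0 s1 by simp
  have w4: "0 \<le> s^4 - s^5" using power_decreasing[of 4 5 s] s0 s1 by simp
  have w5: "0 \<le> s^5 - s^6" using power_decreasing[of 5 6 s] s0 s1 by simp
  have w6: "0 \<le> s^6" using s0 by simp
  show ?thesis unfolding e by (intro add_pos_nonneg mult_nonneg_nonneg) (use w0 w1 w2 w3 w4 w5 w6 in simp_all)
qed
lemma pol_Cu3_q0: fixes y::real assumes "0 \<le> y" "y \<le> (1/4)" shows "0 < pol_Cu3 y"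
  by (rule piece_helper[where f=pol_Cu3 and l="0" and w="(1/4)", OF pol_Cu3_p0]) (use assms in simp_all)
lemma pol_Cu3_p1: fixes s::real assumes s0: "0 \<le> s" and s1: "s \<le> 1" shows "0 < pol_Cu3 ((1/4) + (1/4)*s)"
proof -
  have e: "pol_Cu3 ((1/4) + (1/4)*s) = (243661/217088) + 0*(1 - s) + (6839/10240)*(s - s^2) + (357441/217088)*(s^2 - s^3) + (2289561/1085440)*(s^3 - s^4) + (292521/135680)*(s^4 - s^5) + (1177959/542720)*(s^5 - s^6) + (470643/217088)*s^6" unfolding pol_Cu3_def by algebra
  have w0: "0 \<le> 1 - s" using s1 by simp
  have w1: "0 \<le> s - s^2" using power_decreasing[of 1 2 s] s0 s1 by simp
  have w2: "0 \<le> s^2 - s^3" using power_decreasing[of 2 3 s] s0 s1 by simp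
  have w3: "0 \<le> s^3 - s^4" using power_decreasing[of 3 4 s] s0 s1 by simp
  have w4: "0 \<le> s^4 - s^5" using power_decreasing[of 4 5 s] s0 s1 by simp
  have w5: "0 \<le> s^5 - s^6" using power_decreasing[of 5 6 s] s0 s1 by simp
  have w6: "0 \<le> s^6" using s0 by simp
  show ?thesis unfolding e by (intro add_pos_nonneg mult_nonneg_nonneg) (use w0 w1 w2 w3 w4 w5 w6 in simp_all)
qed
lemma pol_Cu3_q1: fixes y::real assumes "(1/4) \<le> y" "y \<le> (1/2)" shows "0 < pol_Cu3 y"
  by (rule piece_helper[where f=pol_Cu3 and l="(1/4)" and w="(1/4)", OF pol_Cu3_p1]) (use assms in simp_all)
lemma pos_Cu3: fixes y::real assumes "0 \<le> y" "y \<le> (1/2)" shows "0 < pol_Cu3 y"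
proof -
  have c0: "0 < pol_Cu3 y" if "0 \<le> y" "y \<le> (1/4)" using pol_Cu3_q0 that by blast
  have c1: "0 < pol_Cu3 y" if "(1/4) \<le> y" "y \<le> (1/2)" using pol_Cu3_q1 that by blast
  show ?thesis using assms c0 c1 by linarith
qed
definition pol_DNu :: "real \<Rightarrow> real" where "pol_DNu y = ((680265/44944) + (-14985/212)*y + (7696413/44944)*y^2 + (-28971/106)*y^3 + (69471447/224720)*y^4 + (-266733/1060)*y^5 + (32159531/224720)*y^6 + (-17982/265)*y^7 + (48/5)*y^8)"
lemma pol_DNu_p0: fixes s::real assumes s0: "0 \<le> s" and s1: "s \<le> 1" shows "0 < pol_DNu (0 + (1/8)*s)"
proof -
  have e: "pol_DNu (0 + (1/8)*s) = (566325/89888) + (14985/1696)*(1 - s) + 0*(s - s^2) + (7696413/2876416)*(s^2 - s^3) + (3080475/1438208)*(s^3 - s^4) + (2040975447/920453120)*(s^4 - s^5) + (813562809/368181248)*(s^5 - s^6) + (130202208971/58908999680)*(s^6 - s^7) + (130200302879/58908999680)*(s^7 - s^8) + (130200336587/58908999680)*s^8" unfolding pol_DNu_def by algebra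
  have w0: "0 \<le> 1 - s" using s1 by simp
  have w1: "0 \<le> s - s^2" using power_decreasing[of 1 2 s] s0 s1 by simp
  have w2: "0 \<le> s^2 - s^3" using power_decreasing[of 2 3 s] s0 s1 by simp
  have w3: "0 \<le> s^3 - s^4" using power_decreasing[of 3 4 s] s0 s1 by simp
  have w4: "0 \<le> s^4 - s^5" using power_decreasing[of 4 5 s] s0 s1 by simp
  have w5: "0 \<le> s^5 - s^6" using power_decreasing[of 5 6 s] s0 s1 by simp
  have w6: "0 \<le> s^6 - s^7" using power_decreasing[of 6 7 s] s0 s1 by simp
  have w7: "0 \<le> s^7 - s^8" using power_decreasing[of 7 8 s] s0 s1 by simp
  have w8: "0 \<le> s^8" using s0 by simp
  show ?thesis unfolding e by (intro add_pos_nonneg mult_nonneg_nonneg) (use w0 w1 w2 w3 w4 w5 w6 w7 w8 in simp_all)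
qed
lemma pol_DNu_q0: fixes y::real assumes "0 \<le> y" "y \<le> (1/8)" shows "0 < pol_DNu y"
  by (rule piece_helper[where f=pol_DNu and l="0" and w="(1/8)", OF pol_DNu_p0]) (use assms in simp_all)
lemma pol_DNu_p1: fixes s::real assumes s0: "0 \<le> s" and s1: "s \<le> 1" shows "0 < pol_DNu ((1/8) + (1/8)*s)"
proof -
  have e: "pol_DNu ((1/8) + (1/8)*s) = (43493161669/11781799936) + (141940640121/29454499840)*(1 - s) + 0*(s - s^2) + (17176048869/11781799936)*(s^2 - s^3) + (13654645181/11781799936)*(s^3 - s^4) + (35437770989/29454499840)*(s^4 - s^5) + (1102780933/920453120)*(s^5 - s^6) + (70597740423/58908999680)*(s^6 - s^7) + (14119220799/11781799936)*(s^7 - s^8) + (70596137703/58908999680)*s^8" unfolding pol_DNu_def by algebra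
  have w0: "0 \<le> 1 - s" using s1 by simp
  have w1: "0 \<le> s - s^2" using power_decreasing[of 1 2 s] s0 s1 by simp
  have w2: "0 \<le> s^2 - s^3" using power_decreasing[of 2 3 s] s0 s1 by simp
  have w3: "0 \<le> s^3 - s^4" using power_decreasing[of 3 4 s] s0 s1 by simp
  have w4: "0 \<le> s^4 - s^5" using power_decreasing[of 4 5 s] s0 s1 by simp
  have w5: "0 \<le> s^5 - s^6" using power_decreasing[of 5 6 s] s0 s1 by simp
  have w6: "0 \<le> s^6 - s^7" using power_decreasing[of 6 7 s] s0 s1 by simp
  have w7: "0 \<le> s^7 - s^8" using power_decreasing[of 7 8 s] s0 s1 by simp
  have w8: "0 \<le> s^8" using s0 by simp
  show ?thesis unfolding e by (intro add_pos_nonneg mult_nonneg_nonneg) (use w0 w1 w2 w3 w4 w5 w6 w7 w8 in simp_all)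
qed
lemma pol_DNu_q1: fixes y::real assumes "(1/8) \<le> y" "y \<le> (1/4)" shows "0 < pol_DNu y"
  by (rule piece_helper[where f=pol_DNu and l="(1/8)" and w="(1/8)", OF pol_DNu_p1]) (use assms in simp_all)
lemma pol_DNu_p2: fixes s::real assumes s0: "0 \<le> s" and s1: "s \<le> 1" shows "0 < pol_DNu ((1/4) + (1/8)*s)"
proof -
  have e: "pol_DNu ((1/4) + (1/8)*s) = (258103381/115056640) + (2436140859/920453120)*(1 - s) + 0*(s - s^2) + (2872528269/3681812480)*(s^2 - s^3) + (2257931399/3681812480)*(s^3 - s^4) + (9370725593/14727249920)*(s^4 - s^5) + (4658928379/7363624960)*(s^5 - s^6) + (37280676571/58908999680)*(s^6 - s^7) + (37279309807/58908999680)*(s^7 - s^8) + (7455868703/11781799936)*s^8" unfolding pol_DNu_def by algebra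
  have w0: "0 \<le> 1 - s" using s1 by simp
  have w1: "0 \<le> s - s^2" using power_decreasing[of 1 2 s] s0 s1 by simp
  have w2: "0 \<le> s^2 - s^3" using power_decreasing[of 2 3 s] s0 s1 by simp
  have w3: "0 \<le> s^3 - s^4" using power_decreasing[of 3 4 s] s0 s1 by simp
  have w4: "0 \<le> s^4 - s^5" using power_decreasing[of 4 5 s] s0 s1 by simp
  have w5: "0 \<le> s^5 - s^6" using power_decreasing[of 5 6 s] s0 s1 by simp
  have w6: "0 \<le> s^6 - s^7" using power_decreasing[of 6 7 s] s0 s1 by simp
  have w7: "0 \<le> s^7 - s^8" using power_decreasing[of 7 8 s] s0 s1 by simp
  have w8: "0 \<le> s^8" using s0 by simp
  show ?thesis unfolding e by (intro add_pos_nonneg mult_nonneg_nonneg) (use w0 w1 w2 w3 w4 w5 w6 w7 w8 in simp_all)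
qed
lemma pol_DNu_q2: fixes y::real assumes "(1/4) \<le> y" "y \<le> (3/8)" shows "0 < pol_DNu y"
  by (rule piece_helper[where f=pol_DNu and l="(1/4)" and w="(1/8)", OF pol_DNu_p2]) (use assms in simp_all)
lemma pol_DNu_p3: fixes s::real assumes s0: "0 \<le> s" and s1: "s \<le> 1" shows "0 < pol_DNu ((3/8) + (1/8)*s)"
proof -
  have e: "pol_DNu ((3/8) + (1/8)*s) = (80348337261/58908999680) + (44539968663/29454499840)*(1 - s) + 0*(s - s^2) + (22592033937/58908999680)*(s^2 - s^3) + (16206772257/58908999680)*(s^3 - s^4) + (1659866145/5890899968)*(s^4 - s^5) + (4103967237/14727249920)*(s^5 - s^6) + (16416494963/58908999680)*(s^6 - s^7) + (16415397863/58908999680)*(s^7 - s^8) + (16415431571/58908999680)*s^8" unfolding pol_DNu_def by algebra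
  have w0: "0 \<le> 1 - s" using s1 by simp
  have w1: "0 \<le> s - s^2" using power_decreasing[of 1 2 s] s0 s1 by simp
  have w2: "0 \<le> s^2 - s^3" using power_decreasing[of 2 3 s] s0 s1 by simp
  have w3: "0 \<le> s^3 - s^4" using power_decreasing[of 3 4 s] s0 s1 by simp
  have w4: "0 \<le> s^4 - s^5" using power_decreasing[of 4 5 s] s0 s1 by simp
  have w5: "0 \<le> s^5 - s^6" using power_decreasing[of 5 6 s] s0 s1 by simp
  have w6: "0 \<le> s^6 - s^7" using power_decreasing[of 6 7 s] s0 s1 by simp
  have w7: "0 \<le> s^7 - s^8" using power_decreasing[of 7 8 s] s0 s1 by simp
  have w8: "0 \<le> s^8" using s0 by simp
  show ?thesis unfolding e by (intro add_pos_nonneg mult_nonneg_nonneg) (use w0 w1 w2 w3 w4 w5 w6 w7 w8 in simp_all)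
qed
lemma pol_DNu_q3: fixes y::real assumes "(3/8) \<le> y" "y \<le> (1/2)" shows "0 < pol_DNu y"
  by (rule piece_helper[where f=pol_DNu and l="(3/8)" and w="(1/8)", OF pol_DNu_p3]) (use assms in simp_all)
lemma pos_DNu: fixes y::real assumes "0 \<le> y" "y \<le> (1/2)" shows "0 < pol_DNu y"
proof -
  have c0: "0 < pol_DNu y" if "0 \<le> y" "y \<le> (1/8)" using pol_DNu_q0 that by blast
  have c1: "0 < pol_DNu y" if "(1/8) \<le> y" "y \<le> (1/4)" using pol_DNu_q1 that by blast
  have c2: "0 < pol_DNu y" if "(1/4) \<le> y" "y \<le> (3/8)" using pol_DNu_q2 that by blast
  have c3: "0 < pol_DNu y" if "(3/8) \<le> y" "y \<le> (1/2)" using pol_DNu_q3 that by blast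
  show ?thesis using assms c0 c1 c2 c3 by linarith
qed
definition pol_Mu :: "real \<Rightarrow> real" where "pol_Mu y = ((1731807/100) + (-6082254801/62500)*y + (28945917/100)*y^2 + (-730631181/1250)*y^3 + (219161943/250)*y^4 + (-158731039899/156250)*y^5 + (230683761/250)*y^6 + (-51159871854/78125)*y^7 + (888841107/2500)*y^8 + (-220237466721/1562500)*y^9 + (75174561/2500)*y^10 + (-3747382947/781250)*y^11)"
lemma pol_Mu_p0: fixes s::real assumes s0: "0 \<le> s" and s1: "s \<le> 1" shows "0 < pol_Mu (0 + (1/8)*s)"
proof -
  have e: "pol_Mu (0 + (1/8)*s) = (2576780199/500000) + (6082254801/500000)*(1 - s) + 0*(s - s^2) + (28945917/6400)*(s^2 - s^3) + (2163960519/640000)*(s^3 - s^4) + (18407493867/5120000)*(s^4 - s^5) + (18248762827101/5120000000)*(s^5 - s^6) + (146134279967433/40960000000)*(s^6 - s^7) + (292242979998939/81920000000)*(s^7 - s^8) + (18703661825070471/5242880000000)*(s^8 - s^9) + (748146252765352119/209715200000000)*(s^9 - s^10) + (5985170069106917577/1677721600000000)*(s^10 - s^11) + (23940680272680287361/6710886400000000)*s^11" unfolding pol_Mu_def by algebra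
  have w0: "0 \<le> 1 - s" using s1 by simp
  have w1: "0 \<le> s - s^2" using power_decreasing[of 1 2 s] s0 s1 by simp
  have w2: "0 \<le> s^2 - s^3" using power_decreasing[of 2 3 s] s0 s1 by simp
  have w3: "0 \<le> s^3 - s^4" using power_decreasing[of 3 4 s] s0 s1 by simp
  have w4: "0 \<le> s^4 - s^5" using power_decreasing[of 4 5 s] s0 s1 by simp
  have w5: "0 \<le> s^5 - s^6" using power_decreasing[of 5 6 s] s0 s1 by simp
  have w6: "0 \<le> s^6 - s^7" using power_decreasing[of 6 7 s] s0 s1 by simp
  have w7: "0 \<le> s^7 - s^8" using power_decreasing[of 7 8 s] s0 s1 by simp
  have w8: "0 \<le> s^8 - s^9" using power_decreasing[of 8 9 s] s0 s1 by simp
  have w9: "0 \<le> s^9 - s^10" using power_decreasing[of 9 10 s] s0 s1 by simp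
  have w10: "0 \<le> s^10 - s^11" using power_decreasing[of 10 11 s] s0 s1 by simp
  have w11: "0 \<le> s^11" using s0 by simp
  show ?thesis unfolding e by (intro add_pos_nonneg mult_nonneg_nonneg) (use w0 w1 w2 w3 w4 w5 w6 w7 w8 w9 w10 w11 in simp_all)
qed
lemma pol_Mu_q0: fixes y::real assumes "0 \<le> y" "y \<le> (1/8)" shows "0 < pol_Mu y"
  by (rule piece_helper[where f=pol_Mu and l="0" and w="(1/8)", OF pol_Mu_p0]) (use assms in simp_all)
lemma pol_Mu_p1: fixes s::real assumes s0: "0 \<le> s" and s1: "s \<le> 1" shows "0 < pol_Mu ((1/8) + (1/8)*s)"
proof -
  have e: "pol_Mu ((1/8) + (1/8)*s) = (2430549183196134177/838860800000000) + (7816249038725600229/1342177280000000)*(1 - s) + 0*(s - s^2) + (14219664125600758383/6710886400000000)*(s^2 - s^3) + (33217536774467559/20971520000000)*(s^3 - s^4) + (5657872225969585749/3355443200000000)*(s^4 - s^5) + (700783786140164187/419430400000000)*(s^5 - s^6) + (224498435642269311/134217728000000)*(s^6 - s^7) + (701483224534346913/419430400000000)*(s^7 - s^8) + (2244763643511236241/1342177280000000)*(s^8 - s^9) + (1402976605401901131/838860800000000)*(s^9 - s^10) + (11223812989930399131/6710886400000000)*(s^10 - s^11) + (1402976623272877023/838860800000000)*s^11" unfolding pol_Mu_def by algebra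
  have w0: "0 \<le> 1 - s" using s1 by simp
  have w1: "0 \<le> s - s^2" using power_decreasing[of 1 2 s] s0 s1 by simp
  have w2: "0 \<le> s^2 - s^3" using power_decreasing[of 2 3 s] s0 s1 by simp
  have w3: "0 \<le> s^3 - s^4" using power_decreasing[of 3 4 s] s0 s1 by simp
  have w4: "0 \<le> s^4 - s^5" using power_decreasing[of 4 5 s] s0 s1 by simp
  have w5: "0 \<le> s^5 - s^6" using power_decreasing[of 5 6 s] s0 s1 by simp
  have w6: "0 \<le> s^6 - s^7" using power_decreasing[of 6 7 s] s0 s1 by simp
  have w7: "0 \<le> s^7 - s^8" using power_decreasing[of 7 8 s] s0 s1 by simp
  have w8: "0 \<le> s^8 - s^9" using power_decreasing[of 8 9 s] s0 s1 by simp
  have w9: "0 \<le> s^9 - s^10" using power_decreasing[of 9 10 s] s0 s1 by simp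
  have w10: "0 \<le> s^10 - s^11" using power_decreasing[of 10 11 s] s0 s1 by simp
  have w11: "0 \<le> s^11" using s0 by simp
  show ?thesis unfolding e by (intro add_pos_nonneg mult_nonneg_nonneg) (use w0 w1 w2 w3 w4 w5 w6 w7 w8 w9 w10 w11 in simp_all)
qed
lemma pol_Mu_q1: fixes y::real assumes "(1/8) \<le> y" "y \<le> (1/4)" shows "0 < pol_Mu y"
  by (rule piece_helper[where f=pol_Mu and l="(1/8)" and w="(1/8)", OF pol_Mu_p1]) (use assms in simp_all)
lemma pol_Mu_p2: fixes s::real assumes s0: "0 \<le> s" and s1: "s \<le> 1" shows "0 < pol_Mu ((1/4) + (1/8)*s)"
proof -
  have e: "pol_Mu ((1/4) + (1/8)*s) = (11280513434726841/6553600000000) + (18668906928312309/6553600000000)*(1 - s) + 0*(s - s^2) + (13080521322632277/13107200000000)*(s^2 - s^3) + (19648634940638187/26214400000000)*(s^3 - s^4) + (10448518439083899/13107200000000)*(s^4 - s^5) + (1656231213700947/2097152000000)*(s^5 - s^6) + (82906138987647747/104857600000000)*(s^6 - s^7) + (33158241241312659/41943040000000)*(s^7 - s^8) + (663170354801659263/838860800000000)*(s^8 - s^9) + (1326339681279535173/1677721600000000)*(s^9 - s^10) + (2652679415306059179/3355443200000000)*(s^10 - s^11) + (5305358826864735411/6710886400000000)*s^11" unfolding pol_Mu_def by algebra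
  have w0: "0 \<le> 1 - s" using s1 by simp
  have w1: "0 \<le> s - s^2" using power_decreasing[of 1 2 s] s0 s1 by simp
  have w2: "0 \<le> s^2 - s^3" using power_decreasing[of 2 3 s] s0 s1 by simp
  have w3: "0 \<le> s^3 - s^4" using power_decreasing[of 3 4 s] s0 s1 by simp
  have w4: "0 \<le> s^4 - s^5" using power_decreasing[of 4 5 s] s0 s1 by simp
  have w5: "0 \<le> s^5 - s^6" using power_decreasing[of 5 6 s] s0 s1 by simp
  have w6: "0 \<le> s^6 - s^7" using power_decreasing[of 6 7 s] s0 s1 by simp
  have w7: "0 \<le> s^7 - s^8" using power_decreasing[of 7 8 s] s0 s1 by simp
  have w8: "0 \<le> s^8 - s^9" using power_decreasing[of 8 9 s] s0 s1 by simp
  have w9: "0 \<le> s^9 - s^10" using power_decreasing[of 9 10 s] s0 s1 by simp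
  have w10: "0 \<le> s^10 - s^11" using power_decreasing[of 10 11 s] s0 s1 by simp
  have w11: "0 \<le> s^11" using s0 by simp
  show ?thesis unfolding e by (intro add_pos_nonneg mult_nonneg_nonneg) (use w0 w1 w2 w3 w4 w5 w6 w7 w8 w9 w10 w11 in simp_all)
qed
lemma pol_Mu_q2: fixes y::real assumes "(1/4) \<le> y" "y \<le> (3/8)" shows "0 < pol_Mu y"
  by (rule piece_helper[where f=pol_Mu and l="(1/4)" and w="(1/8)", OF pol_Mu_p2]) (use assms in simp_all)
lemma pol_Mu_p3: fixes s::real assumes s0: "0 \<le> s" and s1: "s \<le> 1" shows "0 < pol_Mu ((3/8) + (1/8)*s)"
proof -
  have e: "pol_Mu ((3/8) + (1/8)*s) = (3597170155168601457/3355443200000000) + (9662264273687817681/6710886400000000)*(1 - s) + 0*(s - s^2) + (3193957725298335621/6710886400000000)*(s^2 - s^3) + (1203866583381672987/3355443200000000)*(s^3 - s^4) + (637152623896787277/1677721600000000)*(s^4 - s^5) + (252305078521630353/671088640000000)*(s^5 - s^6) + (631324335132715173/1677721600000000)*(s^6 - s^7) + (1262420153186782107/3355443200000000)*(s^7 - s^8) + (504970331086284177/1342177280000000)*(s^8 - s^9) + (19725378054453141/52428800000000)*(s^9 - s^10) + (2524848455242767297/6710886400000000)*(s^10 - s^11) + (50496969029907687/134217728000000)*s^11" unfolding pol_Mu_def by algebra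
  have w0: "0 \<le> 1 - s" using s1 by simp
  have w1: "0 \<le> s - s^2" using power_decreasing[of 1 2 s] s0 s1 by simp
  have w2: "0 \<le> s^2 - s^3" using power_decreasing[of 2 3 s] s0 s1 by simp
  have w3: "0 \<le> s^3 - s^4" using power_decreasing[of 3 4 s] s0 s1 by simp
  have w4: "0 \<le> s^4 - s^5" using power_decreasing[of 4 5 s] s0 s1 by simp
  have w5: "0 \<le> s^5 - s^6" using power_decreasing[of 5 6 s] s0 s1 by simp
  have w6: "0 \<le> s^6 - s^7" using power_decreasing[of 6 7 s] s0 s1 by simp
  have w7: "0 \<le> s^7 - s^8" using power_decreasing[of 7 8 s] s0 s1 by simp
  have w8: "0 \<le> s^8 - s^9" using power_decreasing[of 8 9 s] s0 s1 by simp
  have w9: "0 \<le> s^9 - s^10" using power_decreasing[of 9 10 s] s0 s1 by simp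
  have w10: "0 \<le> s^10 - s^11" using power_decreasing[of 10 11 s] s0 s1 by simp
  have w11: "0 \<le> s^11" using s0 by simp
  show ?thesis unfolding e by (intro add_pos_nonneg mult_nonneg_nonneg) (use w0 w1 w2 w3 w4 w5 w6 w7 w8 w9 w10 w11 in simp_all)
qed
lemma pol_Mu_q3: fixes y::real assumes "(3/8) \<le> y" "y \<le> (1/2)" shows "0 < pol_Mu y"
  by (rule piece_helper[where f=pol_Mu and l="(3/8)" and w="(1/8)", OF pol_Mu_p3]) (use assms in simp_all)
lemma pos_Mu: fixes y::real assumes "0 \<le> y" "y \<le> (1/2)" shows "0 < pol_Mu y"
proof -
  have c0: "0 < pol_Mu y" if "0 \<le> y" "y \<le> (1/8)" using pol_Mu_q0 that by blast
  have c1: "0 < pol_Mu y" if "(1/8) \<le> y" "y \<le> (1/4)" using pol_Mu_q1 that by blast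
  have c2: "0 < pol_Mu y" if "(1/4) \<le> y" "y \<le> (3/8)" using pol_Mu_q2 that by blast
  have c3: "0 < pol_Mu y" if "(3/8) \<le> y" "y \<le> (1/2)" using pol_Mu_q3 that by blast
  show ?thesis using assms c0 c1 c2 c3 by linarith
qed
definition pol_Db :: "real \<Rightarrow> real" where "pol_Db y = ((333/212) + (-4)*y + (999/212)*y^2 + (-3)*y^3)"
lemma pol_Db_p0: fixes s::real assumes s0: "0 \<le> s" and s1: "s \<le> 1" shows "0 < pol_Db (0 + (1/4)*s)"
proof -
  have e: "pol_Db (0 + (1/4)*s) = (121/212) + 1*(1 - s) + 0*(s - s^2) + (999/3392)*(s^2 - s^3) + (105/424)*s^3" unfolding pol_Db_def by algebra
  have w0: "0 \<le> 1 - s" using s1 by simp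
  have w1: "0 \<le> s - s^2" using power_decreasing[of 1 2 s] s0 s1 by simp
  have w2: "0 \<le> s^2 - s^3" using power_decreasing[of 2 3 s] s0 s1 by simp
  have w3: "0 \<le> s^3" using s0 by simp
  show ?thesis unfolding e by (intro add_pos_nonneg mult_nonneg_nonneg) (use w0 w1 w2 w3 in simp_all)
qed
lemma pol_Db_q0: fixes y::real assumes "0 \<le> y" "y \<le> (1/4)" shows "0 < pol_Db y"
  by (rule piece_helper[where f=pol_Db and l="0" and w="(1/4)", OF pol_Db_p0]) (use assms in simp_all)
lemma pol_Db_p1: fixes s::real assumes s0: "0 \<le> s" and s1: "s \<le> 1" shows "0 < pol_Db ((1/4) + (1/4)*s)"
proof -
  have e: "pol_Db ((1/4) + (1/4)*s) = (905/3392) + (1871/3392)*(1 - s) + 0*(s - s^2) + (261/1696)*(s^2 - s^3) + (363/3392)*s^3" unfolding pol_Db_def by algebra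
  have w0: "0 \<le> 1 - s" using s1 by simp
  have w1: "0 \<le> s - s^2" using power_decreasing[of 1 2 s] s0 s1 by simp
  have w2: "0 \<le> s^2 - s^3" using power_decreasing[of 2 3 s] s0 s1 by simp
  have w3: "0 \<le> s^3" using s0 by simp
  show ?thesis unfolding e by (intro add_pos_nonneg mult_nonneg_nonneg) (use w0 w1 w2 w3 in simp_all)
qed
lemma pol_Db_q1: fixes y::real assumes "(1/4) \<le> y" "y \<le> (1/2)" shows "0 < pol_Db y"
  by (rule piece_helper[where f=pol_Db and l="(1/4)" and w="(1/4)", OF pol_Db_p1]) (use assms in simp_all)
lemma pos_Db: fixes y::real assumes "0 \<le> y" "y \<le> (1/2)" shows "0 < pol_Db y"
proof -
  have c0: "0 < pol_Db y" if "0 \<le> y" "y \<le> (1/4)" using pol_Db_q0 that by blast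
  have c1: "0 < pol_Db y" if "(1/4) \<le> y" "y \<le> (1/2)" using pol_Db_q1 that by blast
  show ?thesis using assms c0 c1 by linarith
qed
definition Wp :: "real \<Rightarrow> real \<Rightarrow> real" where "Wp x t = ((-9)*t^3 + (-12/5)*t^5) + (27*t^2 + (87/5)*t^4 + (-12/5)*t^6)*x + ((-27)*t + (-114/5)*t^3 + (13/5)*t^5)*x^2 + (9 + 3*t^2 + (-5)*t^4 + 1*t^6)*x^3 + ((24/5)*t + (24/5)*t^3)*x^4"
definition Wph :: "real \<Rightarrow> real \<Rightarrow> real \<Rightarrow> real" where "Wph p q t = ((-9)*t^3 + (-12/5)*t^5)*p^0*q^4 + (27*t^2 + (87/5)*t^4 + (-12/5)*t^6)*p^1*q^3 + ((-27)*t + (-114/5)*t^3 + (13/5)*t^5)*p^2*q^2 + (9 + 3*t^2 + (-5)*t^4 + 1*t^6)*p^3*q^1 + ((24/5)*t + (24/5)*t^3)*p^4*q^0"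
lemma Wp_hom: fixes p q t :: real assumes "q \<noteq> 0" shows "Wp (p/q) t = Wph p q t / q^4"
  using assms unfolding Wp_def Wph_def by (simp add: field_simps power_divide; algebra)

definition WC1 :: "real \<Rightarrow> real \<Rightarrow> real" where "WC1 x t = (27*t^2 + (87/5)*t^4 + (-12/5)*t^6) + ((-54)*t + (-228/5)*t^3 + (26/5)*t^5)*x + (27 + 9*t^2 + (-15)*t^4 + 3*t^6)*x^2 + ((96/5)*t + (96/5)*t^3)*x^3"
definition WC1h :: "real \<Rightarrow> real \<Rightarrow> real \<Rightarrow> real" where "WC1h p q t = (27*t^2 + (87/5)*t^4 + (-12/5)*t^6)*p^0*q^3 + ((-54)*t + (-228/5)*t^3 + (26/5)*t^5)*p^1*q^2 + (27 + 9*t^2 + (-15)*t^4 + 3*t^6)*p^2*q^1 + ((96/5)*t + (96/5)*t^3)*p^3*q^0"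
lemma WC1_hom: fixes p q t :: real assumes "q \<noteq> 0" shows "WC1 (p/q) t = WC1h p q t / q^3"
  using assms unfolding WC1_def WC1h_def by (simp add: field_simps power_divide; algebra)

definition WC2 :: "real \<Rightarrow> real \<Rightarrow> real" where "WC2 x t = ((-27)*t + (-114/5)*t^3 + (13/5)*t^5) + (27 + 9*t^2 + (-15)*t^4 + 3*t^6)*x + ((144/5)*t + (144/5)*t^3)*x^2"
definition WC2h :: "real \<Rightarrow> real \<Rightarrow> real \<Rightarrow> real" where "WC2h p q t = ((-27)*t + (-114/5)*t^3 + (13/5)*t^5)*p^0*q^2 + (27 + 9*t^2 + (-15)*t^4 + 3*t^6)*p^1*q^1 + ((144/5)*t + (144/5)*t^3)*p^2*q^0"
lemma WC2_hom: fixes p q t :: real assumes "q \<noteq> 0" shows "WC2 (p/q) t = WC2h p q t / q^2"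
  using assms unfolding WC2_def WC2h_def by (simp add: field_simps power_divide; algebra)

definition WC3 :: "real \<Rightarrow> real \<Rightarrow> real" where "WC3 x t = (9 + 3*t^2 + (-5)*t^4 + 1*t^6) + ((96/5)*t + (96/5)*t^3)*x"
definition WC3h :: "real \<Rightarrow> real \<Rightarrow> real \<Rightarrow> real" where "WC3h p q t = (9 + 3*t^2 + (-5)*t^4 + 1*t^6)*p^0*q^1 + ((96/5)*t + (96/5)*t^3)*p^1*q^0"
lemma WC3_hom: fixes p q t :: real assumes "q \<noteq> 0" shows "WC3 (p/q) t = WC3h p q t / q^1"
  using assms unfolding WC3_def WC3h_def by (simp add: field_simps power_divide; algebra)

definition DNp :: "real \<Rightarrow> real \<Rightarrow> real" where "DNp x t = ((-12/5)*t^2) + ((9/5)*t)*x + ((3/5) + 1*t^2)*x^2"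
definition DNph :: "real \<Rightarrow> real \<Rightarrow> real \<Rightarrow> real" where "DNph p q t = ((-12/5)*t^2)*p^0*q^2 + ((9/5)*t)*p^1*q^1 + ((3/5) + 1*t^2)*p^2*q^0"
lemma DNp_hom: fixes p q t :: real assumes "q \<noteq> 0" shows "DNp (p/q) t = DNph p q t / q^2"
  using assms unfolding DNp_def DNph_def by (simp add: field_simps power_divide; algebra)

definition Wup :: "real \<Rightarrow> real \<Rightarrow> real" where "Wup x u = ((-12/5)*u + (-9)*u^3) + ((-12/5) + (87/5)*u^2 + 27*u^4)*x + ((13/5)*u + (-114/5)*u^3 + (-27)*u^5)*x^2 + (1 + (-5)*u^2 + 3*u^4 + 9*u^6)*x^3 + ((24/5)*u^3 + (24/5)*u^5)*x^4"
definition Wuph :: "real \<Rightarrow> real \<Rightarrow> real \<Rightarrow> real" where "Wuph p q u = ((-12/5)*u + (-9)*u^3)*p^0*q^4 + ((-12/5) + (87/5)*u^2 + 27*u^4)*p^1*q^3 + ((13/5)*u + (-114/5)*u^3 + (-27)*u^5)*p^2*q^2 + (1 + (-5)*u^2 + 3*u^4 + 9*u^6)*p^3*q^1 + ((24/5)*u^3 + (24/5)*u^5)*p^4*q^0"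
lemma Wup_hom: fixes p q u :: real assumes "q \<noteq> 0" shows "Wup (p/q) u = Wuph p q u / q^4"
  using assms unfolding Wup_def Wuph_def by (simp add: field_simps power_divide; algebra)

definition WuC1 :: "real \<Rightarrow> real \<Rightarrow> real" where "WuC1 x u = ((-12/5) + (87/5)*u^2 + 27*u^4) + ((26/5)*u + (-228/5)*u^3 + (-54)*u^5)*x + (3 + (-15)*u^2 + 9*u^4 + 27*u^6)*x^2 + ((96/5)*u^3 + (96/5)*u^5)*x^3"
definition WuC1h :: "real \<Rightarrow> real \<Rightarrow> real \<Rightarrow> real" where "WuC1h p q u = ((-12/5) + (87/5)*u^2 + 27*u^4)*p^0*q^3 + ((26/5)*u + (-228/5)*u^3 + (-54)*u^5)*p^1*q^2 + (3 + (-15)*u^2 + 9*u^4 + 27*u^6)*p^2*q^1 + ((96/5)*u^3 + (96/5)*u^5)*p^3*q^0"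
lemma WuC1_hom: fixes p q u :: real assumes "q \<noteq> 0" shows "WuC1 (p/q) u = WuC1h p q u / q^3"
  using assms unfolding WuC1_def WuC1h_def by (simp add: field_simps power_divide; algebra)

definition WuC2 :: "real \<Rightarrow> real \<Rightarrow> real" where "WuC2 x u = ((13/5)*u + (-114/5)*u^3 + (-27)*u^5) + (3 + (-15)*u^2 + 9*u^4 + 27*u^6)*x + ((144/5)*u^3 + (144/5)*u^5)*x^2"
definition WuC2h :: "real \<Rightarrow> real \<Rightarrow> real \<Rightarrow> real" where "WuC2h p q u = ((13/5)*u + (-114/5)*u^3 + (-27)*u^5)*p^0*q^2 + (3 + (-15)*u^2 + 9*u^4 + 27*u^6)*p^1*q^1 + ((144/5)*u^3 + (144/5)*u^5)*p^2*q^0"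
lemma WuC2_hom: fixes p q u :: real assumes "q \<noteq> 0" shows "WuC2 (p/q) u = WuC2h p q u / q^2"
  using assms unfolding WuC2_def WuC2h_def by (simp add: field_simps power_divide; algebra)

definition WuC3 :: "real \<Rightarrow> real \<Rightarrow> real" where "WuC3 x u = (1 + (-5)*u^2 + 3*u^4 + 9*u^6) + ((96/5)*u^3 + (96/5)*u^5)*x"
definition WuC3h :: "real \<Rightarrow> real \<Rightarrow> real \<Rightarrow> real" where "WuC3h p q u = (1 + (-5)*u^2 + 3*u^4 + 9*u^6)*p^0*q^1 + ((96/5)*u^3 + (96/5)*u^5)*p^1*q^0"
lemma WuC3_hom: fixes p q u :: real assumes "q \<noteq> 0" shows "WuC3 (p/q) u = WuC3h p q u / q^1"
  using assms unfolding WuC3_def WuC3h_def by (simp add: field_simps power_divide; algebra)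

definition DNup :: "real \<Rightarrow> real \<Rightarrow> real" where "DNup x u = ((-12/5)) + ((9/5)*u)*x + (1 + (3/5)*u^2)*x^2"
definition DNuph :: "real \<Rightarrow> real \<Rightarrow> real \<Rightarrow> real" where "DNuph p q u = ((-12/5))*p^0*q^2 + ((9/5)*u)*p^1*q^1 + (1 + (3/5)*u^2)*p^2*q^0"
lemma DNup_hom: fixes p q u :: real assumes "q \<noteq> 0" shows "DNup (p/q) u = DNuph p q u / q^2"
  using assms unfolding DNup_def DNuph_def by (simp add: field_simps power_divide; algebra)

lemma quartic_mono:
  fixes c0 c1 c2 c3 c4 h1 h2 :: real
  assumes "0 \<le> c1" "0 \<le> c2" "0 \<le> c3" "0 \<le> c4" "0 \<le> h1" "h1 \<le> h2"
  shows "c0 + c1*h1 + c2*h1^2 + c3*h1^3 + c4*h1^4 \<le> c0 + c1*h2 + c2*h2^2 + c3*h2^3 + c4*h2^4"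
proof -
  have "c1*h1 \<le> c1*h2" by (rule mult_left_mono) (use assms in auto)
  moreover have "c2*h1^2 \<le> c2*h2^2" by (rule mult_left_mono[OF power_mono]) (use assms in auto)
  moreover have "c3*h1^3 \<le> c3*h2^3" by (rule mult_left_mono[OF power_mono]) (use assms in auto)
  moreover have "c4*h1^4 \<le> c4*h2^4" by (rule mult_left_mono[OF power_mono]) (use assms in auto)
  ultimately show ?thesis by linarith
qed

lemma quad_frac: fixes a0 a1 a2 w q :: real assumes "q \<noteq> 0"
  shows "a0 + a1*(w/q) - a2*(w/q)^2 = (a0*q^2 + a1*w*q - a2*w^2)/q^2"
  using assms by (simp add: field_simps power2_eq_square)

lemma quad_pos:
  fixes a0 a1 a2 x v :: real
  assumes "0 < a0" "0 < a0 + a1*v - a2*v^2" "0 \<le> a2" "0 \<le> x" "x \<le> v"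
  shows "0 < a0 + a1*x - a2*x^2"
proof (cases "x = 0")
  case True thus ?thesis using assms by simp
next
  case False
  hence x0: "0 < x" using assms by simp
  hence v0: "0 < v" using assms by simp
  have e: "a0 + a1*x - a2*x^2 = (1 - x/v)*a0 + (x/v)*(a0 + a1*v - a2*v^2) + a2*x*(v - x)"
    using v0 by (simp add: field_simps power2_eq_square)
  have "0 \<le> (1 - x/v)*a0" using assms v0 by (intro mult_nonneg_nonneg) (auto simp: field_simps)
  moreover have "0 < (x/v)*(a0 + a1*v - a2*v^2)" using assms x0 v0 by (intro mult_pos_pos) auto
  moreover have "0 \<le> a2*x*(v - x)" using assms by (intro mult_nonneg_nonneg) auto
  ultimately show ?thesis unfolding e by linarith
qed

lemma Wp_taylor: "Wp (p + h) t = Wp p t + WC1 p t * h + WC2 p t * h^2 + WC3 p t * h^3 + ((24/5)*t + (24/5)*t^3) * h^4"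
  unfolding Wp_def WC1_def WC2_def WC3_def by algebra

lemma Wp_mono:
  assumes "0 \<le> WC1 p t" "0 \<le> WC2 p t" "0 \<le> WC3 p t" "0 \<le> t" "p \<le> a" "a \<le> b"
  shows "Wp a t \<le> Wp b t"
proof -
  have "0 \<le> ((24/5)*t + (24/5)*t^3)" using assms(4) by simp
  from quartic_mono[OF assms(1-3) this, of "a - p" "b - p" "Wp p t"] assms
  have "Wp p t + WC1 p t * (a-p) + WC2 p t * (a-p)^2 + WC3 p t * (a-p)^3 + ((24/5)*t + (24/5)*t^3) * (a-p)^4
     \<le> Wp p t + WC1 p t * (b-p) + WC2 p t * (b-p)^2 + WC3 p t * (b-p)^3 + ((24/5)*t + (24/5)*t^3) * (b-p)^4" by simp
  thus ?thesis using Wp_taylor[of p "a-p" t] Wp_taylor[of p "b-p" t] by simp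
qed

lemma Wup_taylor: "Wup (p + h) u = Wup p u + WuC1 p u * h + WuC2 p u * h^2 + WuC3 p u * h^3 + ((24/5)*u^3 + (24/5)*u^5) * h^4"
  unfolding Wup_def WuC1_def WuC2_def WuC3_def by algebra

lemma Wup_mono:
  assumes "0 \<le> WuC1 p u" "0 \<le> WuC2 p u" "0 \<le> WuC3 p u" "0 \<le> u" "p \<le> a" "a \<le> b"
  shows "Wup a u \<le> Wup b u"
proof -
  have "0 \<le> ((24/5)*u^3 + (24/5)*u^5)" using assms(4) by simp
  from quartic_mono[OF assms(1-3) this, of "a - p" "b - p" "Wup p u"] assms
  have "Wup p u + WuC1 p u * (a-p) + WuC2 p u * (a-p)^2 + WuC3 p u * (a-p)^3 + ((24/5)*u^3 + (24/5)*u^5) * (a-p)^4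
     \<le> Wup p u + WuC1 p u * (b-p) + WuC2 p u * (b-p)^2 + WuC3 p u * (b-p)^3 + ((24/5)*u^3 + (24/5)*u^5) * (b-p)^4" by simp
  thus ?thesis using Wup_taylor[of p "a-p" u] Wup_taylor[of p "b-p" u] by simp
qed

definition Np :: "real \<Rightarrow> real \<Rightarrow> real" where
  "Np x t = (-18/5 - 2*t^2)*x^2 + (21/5*t + t^3)*x - 3/5*t^2"
definition Dp :: "real \<Rightarrow> real \<Rightarrow> real" where
  "Dp x t = -(3 + t^2)*x^2 + (6*t + t^3)*x - 3*t^2"
definition Mp :: "real \<Rightarrow> real \<Rightarrow> real" where
  "Mp x t = 81*t^2 + (t^3 - 57*t)*x - (24 + 36*t^2)*x^2"

lemma DN_eq: "Dp x t - Np x t = DNp x t" unfolding Dp_def Np_def DNp_def by algebra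
lemma M_eq: "35 * Np x t - 34 * Dp x t = Mp x t" unfolding Dp_def Np_def Mp_def by algebra
lemma D_fac: "Dp x t = (t - x) * (x*(t^2+3) - 3*t)" unfolding Dp_def by algebra
lemma DN_mono: assumes "0 \<le> a" "a \<le> b" "0 \<le> t" shows "DNp a t \<le> DNp b t"
proof -
  have e: "DNp b t - DNp a t = (b - a)*((3/5 + t^2)*(a+b) + 9/5*t)" unfolding DNp_def by algebra
  have "0 \<le> (b - a)*((3/5 + t^2)*(a+b) + 9/5*t)" using assms by (intro mult_nonneg_nonneg add_nonneg_nonneg) auto
  thus ?thesis using e by linarith
qed
lemma DNu_mono: assumes "0 \<le> a" "a \<le> b" "0 \<le> u" shows "DNup a u \<le> DNup b u"
proof -
  have e: "DNup b u - DNup a u = (b - a)*((1 + 3/5*u^2)*(a+b) + 9/5*u)" unfolding DNup_def by algebra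
  have "0 \<le> (b - a)*((1 + 3/5*u^2)*(a+b) + 9/5*u)" using assms by (intro mult_nonneg_nonneg add_nonneg_nonneg) auto
  thus ?thesis using e by linarith
qed

lemma key_small:
  fixes t :: real assumes t0: "0 < t" and t2: "t \<le> 2"
  shows "0 < Wp (arctan t) t \<and> 0 < Dp (arctan t) t \<and> 0 < DNp (arctan t) t \<and> 0 < Mp (arctan t) t"
proof -
  define x where "x = arctan t"
  have y4: "t^2 \<le> 4"
  proof -
    have "t*t \<le> 2*2" using t0 t2 by (intro mult_mono) auto
    thus ?thesis by (simp add: power2_eq_square)
  qed
  have y0: "0 \<le> t^2" by simp
  have Q9: "0 < padeQ9 t" by (rule padeQ9_pos)
  have Q8: "0 < padeQ8 t" by (rule padeQ8_pos)
  have lo: "padeP9 t / padeQ9 t \<le> x" using pade9[of t] t0 by (simp add: x_def)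
  have hi: "x \<le> padeP8 t / padeQ8 t" using pade8[of t] t0 by (simp add: x_def)
  define a where "a = padeP9 t / padeQ9 t"
  define p where "p = 3*t/(3+t^2)"
  have q3: "0 < 3 + t^2" by (simp add: add_pos_nonneg)
  have d91: "padeP9 t * (3 + t^2) - 3*t*padeQ9 t = t^5 * (174594420 + 263860740*(t^2) + 110810700*(t^2)^2 + 11173500*(t^2)^3)"
    unfolding padeP9_def padeQ9_def by algebra
  have d91p: "0 < t^5 * (174594420 + 263860740*(t^2) + 110810700*(t^2)^2 + 11173500*(t^2)^3)" using t0 by (intro mult_pos_pos add_pos_nonneg mult_nonneg_nonneg) simp_all
  have pa: "p < a" unfolding p_def a_def using d91 d91p Q9 q3 by (simp add: field_simps)
  have p0: "0 < p" unfolding p_def using t0 q3 by simp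
  have ax: "a \<le> x" using lo a_def by simp
  have x0: "0 < x" using t0 by (simp add: x_def)
  have c1: "0 \<le> WC1 p t"
  proof -
    have "WC1 p t = WC1h (3*t) (3+t^2) t / (3+t^2)^3" unfolding p_def by (rule WC1_hom) (use q3 in simp)
    moreover have "WC1h (3*t) (3+t^2) t = t^8 * pol_C1 (t^2)" unfolding WC1h_def pol_C1_def by algebra
    moreover have "0 < pol_C1 (t^2)" using pos_C1 y0 y4 by simp
    ultimately show ?thesis using t0 q3 by simp
  qed
  have c2: "0 \<le> WC2 p t"
  proof -
    have "WC2 p t = WC2h (3*t) (3+t^2) t / (3+t^2)^2" unfolding p_def by (rule WC2_hom) (use q3 in simp)
    moreover have "WC2h (3*t) (3+t^2) t = t^3 * pol_C2 (t^2)" unfolding WC2h_def pol_C2_def by algebra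
    moreover have "0 < pol_C2 (t^2)" using pos_C2 y0 y4 by simp
    ultimately show ?thesis using t0 q3 by simp
  qed
  have c3: "0 \<le> WC3 p t"
  proof -
    have "WC3 p t = WC3h (3*t) (3+t^2) t / (3+t^2)" using WC3_hom[of "3+t^2" "3*t" t] q3 unfolding p_def by simp
    moreover have "WC3h (3*t) (3+t^2) t = pol_C3 (t^2)" unfolding WC3h_def pol_C3_def by algebra
    moreover have "0 < pol_C3 (t^2)" using pos_C3 y0 y4 by simp
    ultimately show ?thesis using t0 q3 by simp
  qed
  have Wa: "0 < Wp a t"
  proof -
    have "Wp a t = Wph (padeP9 t) (padeQ9 t) t / (padeQ9 t)^4" unfolding a_def by (rule Wp_hom) (use Q9 in simp)
    moreover have "Wph (padeP9 t) (padeQ9 t) t = t^17 * pol_W9 (t^2)" unfolding Wph_def pol_W9_def padeP9_def padeQ9_def by algebra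
    moreover have "0 < pol_W9 (t^2)" using pos_W9 y0 y4 by simp
    ultimately show ?thesis using t0 Q9 by simp
  qed
  have W: "0 < Wp x t" using Wp_mono[OF c1 c2 c3 _ _ ax, of] Wa pa t0 by fastforce
  have t8: "t * padeQ8 t - padeP8 t = t^3 * (11486475 + 17432415*(t^2) + 7355205*(t^2)^2 + 745569*(t^2)^3)" unfolding padeP8_def padeQ8_def by algebra
  have t8p: "0 < t^3 * (11486475 + 17432415*(t^2) + 7355205*(t^2)^2 + 745569*(t^2)^3)" using t0 by (intro mult_pos_pos add_pos_nonneg mult_nonneg_nonneg) simp_all
  have xt: "x < t"
  proof -
    have "padeP8 t / padeQ8 t < t" using t8 t8p Q8 by (simp add: field_simps)
    thus ?thesis using hi by linarith
  qed
  have px: "p < x" using pa ax by linarith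
  have Dk: "0 < x*(t^2+3) - 3*t" using px q3 unfolding p_def by (simp add: field_simps)
  have D: "0 < Dp x t" unfolding D_fac using xt Dk by simp
  have DNa: "0 < DNp a t"
  proof -
    have "DNp a t = DNph (padeP9 t) (padeQ9 t) t / (padeQ9 t)^2" unfolding a_def by (rule DNp_hom) (use Q9 in simp)
    moreover have "DNph (padeP9 t) (padeQ9 t) t = t^8 * pol_DN9 (t^2)" unfolding DNph_def pol_DN9_def padeP9_def padeQ9_def by algebra
    moreover have "0 < pol_DN9 (t^2)" using pos_DN9 y0 y4 by simp
    ultimately show ?thesis using t0 Q9 by simp
  qed
  have DN: "0 < DNp x t" using DN_mono[of a x t] DNa pa p0 ax t0 by simp
  define v where "v = padeP8 t / padeQ8 t"
  have Mv: "0 < 81*t^2 + (t^3 - 57*t)*v - (24 + 36*t^2)*v^2"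
  proof -
    have "81*t^2 + (t^3 - 57*t)*v - (24 + 36*t^2)*v^2 = (81*t^2*(padeQ8 t)^2 + (t^3 - 57*t)*padeP8 t*padeQ8 t - (24 + 36*t^2)*(padeP8 t)^2) / (padeQ8 t)^2"
      unfolding v_def by (rule quad_frac) (use Q8 in simp)
    moreover have "81*t^2*(padeQ8 t)^2 + (t^3 - 57*t)*padeP8 t*padeQ8 t - (24 + 36*t^2)*(padeP8 t)^2 = t^10 * pol_M8 (t^2)"
      unfolding pol_M8_def padeP8_def padeQ8_def by algebra
    ultimately have "81*t^2 + (t^3 - 57*t)*v - (24 + 36*t^2)*v^2 = (t^10 * pol_M8 (t^2)) / (padeQ8 t)^2" by simp
    moreover have "0 < pol_M8 (t^2)" using pos_M8 y0 y4 by simp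
    ultimately show ?thesis using t0 Q8 by simp
  qed
  have M: "0 < Mp x t" unfolding Mp_def
    by (rule quad_pos[OF _ Mv]) (use t0 x0 hi v_def in auto)
  show ?thesis using W D DN M by (simp add: x_def)
qed

definition Mup :: "real \<Rightarrow> real \<Rightarrow> real" where
  "Mup x u = 81*u + (1 - 57*u^2)*x - (24*u^3 + 36*u)*x^2"

lemma Wp_u: assumes "u \<noteq> 0" shows "Wp x (1/u) = Wup x u / u^6"
  using assms unfolding Wp_def Wup_def by (simp add: field_simps power_divide; algebra)
lemma DNp_u: assumes "u \<noteq> 0" shows "DNp x (1/u) = DNup x u / u^2"
  using assms unfolding DNp_def DNup_def by (simp add: field_simps power_divide; algebra)
lemma Mp_u: assumes "u \<noteq> 0" shows "Mp x (1/u) = Mup x u / u^3"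
  using assms unfolding Mp_def Mup_def by (simp add: field_simps power_divide; algebra)

lemma pi_lo: "333/106 \<le> pi"
proof -
  have "padeP9 1 / padeQ9 1 \<le> arctan 1" by (rule pade9) simp
  thus ?thesis by (simp add: arctan_one padeP9_def padeQ9_def)
qed
lemma pi_hi: "pi \<le> 3927/1250"
proof -
  have "arctan 1 \<le> padeP8 1 / padeQ8 1" by (rule pade8) simp
  thus ?thesis by (simp add: arctan_one padeP8_def padeQ8_def)
qed

lemma key_large:
  fixes t :: real assumes t2: "2 \<le> t"
  shows "0 < Wp (arctan t) t \<and> 0 < Dp (arctan t) t \<and> 0 < DNp (arctan t) t \<and> 0 < Mp (arctan t) t"
proof -
  define u where "u = 1/t"
  have t0: "0 < t" using t2 by simp
  have u0: "0 < u" and uh: "u \<le> 1/2" using t2 by (auto simp: u_def field_simps)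
  have tu: "t = 1/u" using t0 by (simp add: u_def)
  define x where "x = arctan t"
  have xe: "x = pi/2 - arctan u"
    using arctan_inverse[of u] u0 by (simp add: x_def tu)
  have Q2: "0 < padeQ2 u" by (rule padeQ2_pos)
  have Q3: "0 < padeQ3 u" by (rule padeQ3_pos)
  have a2: "arctan u \<le> padeP2 u / padeQ2 u" using pade2[of u] u0 by simp
  have a3: "padeP3 u / padeQ3 u \<le> arctan u" using pade3[of u] u0 by simp
  define l where "l = 333/212 - padeP2 u / padeQ2 u"
  define b where "b = 333/212 - u"
  have lx: "l \<le> x" unfolding l_def xe using a2 pi_lo by linarith
  have uq: "u * padeQ2 u - padeP2 u = (5*u^3)" unfolding padeP2_def padeQ2_def by algebra
  have bl: "b \<le> l"
  proof -
    have "padeP2 u / padeQ2 u \<le> u" using uq u0 Q2 by (simp add: field_simps)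
    thus ?thesis unfolding b_def l_def by linarith
  qed
  have b0: "0 < b" using uh unfolding b_def by simp
  have x0: "0 < x" using t0 by (simp add: x_def)
  have xpi: "x < pi/2" using arctan_ubound[of t] by (simp add: x_def)
  have cu1: "0 \<le> WuC1 b u" proof -
    have "WuC1 b u = pol_Cu1 u" unfolding WuC1_def pol_Cu1_def b_def by algebra
    thus ?thesis using pos_Cu1[of u] u0 uh by simp qed
  have cu2: "0 \<le> WuC2 b u" proof -
    have "WuC2 b u = pol_Cu2 u" unfolding WuC2_def pol_Cu2_def b_def by algebra
    thus ?thesis using pos_Cu2[of u] u0 uh by simp qed
  have cu3: "0 \<le> WuC3 b u" proof -
    have "WuC3 b u = pol_Cu3 u" unfolding WuC3_def pol_Cu3_def b_def by algebra
    thus ?thesis using pos_Cu3[of u] u0 uh by simp qed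
  have Wl: "0 < Wup l u"
  proof -
    have le: "l = (333/212 * padeQ2 u - padeP2 u) / padeQ2 u" unfolding l_def using Q2 by (simp add: field_simps)
    have "Wup l u = Wuph (333/212 * padeQ2 u - padeP2 u) (padeQ2 u) u / (padeQ2 u)^4" unfolding le by (rule Wup_hom) (use Q2 in simp)
    moreover have "Wuph (333/212 * padeQ2 u - padeP2 u) (padeQ2 u) u = pol_Wu u" unfolding Wuph_def pol_Wu_def padeP2_def padeQ2_def by algebra
    moreover have "0 < pol_Wu u" using pos_Wu[of u] u0 uh by simp
    ultimately show ?thesis using Q2 by simp
  qed
  have Wx: "0 < Wup x u" using Wup_mono[OF cu1 cu2 cu3 _ bl lx] Wl u0 by simp
  have W: "0 < Wp x t" unfolding tu using Wp_u[of u x] Wx u0 by simp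
  have xt: "x < t" using xpi pi_hi t2 by linarith
  have Db: "0 < b*(1 + 3*u^2) - 3*u"
  proof -
    have "b*(1 + 3*u^2) - 3*u = pol_Db u" unfolding pol_Db_def b_def by algebra
    thus ?thesis using pos_Db[of u] u0 uh by simp
  qed
  have "b*(1 + 3*u^2) \<le> x*(1 + 3*u^2)" using bl lx by (intro mult_right_mono) (auto simp: add_nonneg_nonneg)
  hence Dk0: "0 < x*(1 + 3*u^2) - 3*u" using Db by linarith
  have "x*(t^2+3) - 3*t = (x*(1 + 3*u^2) - 3*u) / u^2" unfolding tu using u0 by (simp add: field_simps power2_eq_square)
  hence Dk: "0 < x*(t^2+3) - 3*t" using Dk0 u0 by simp
  have D: "0 < Dp x t" unfolding D_fac using xt Dk by simp
  have DNl: "0 < DNup l u"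
  proof -
    have le: "l = (333/212 * padeQ2 u - padeP2 u) / padeQ2 u" unfolding l_def using Q2 by (simp add: field_simps)
    have "DNup l u = DNuph (333/212 * padeQ2 u - padeP2 u) (padeQ2 u) u / (padeQ2 u)^2" unfolding le by (rule DNup_hom) (use Q2 in simp)
    moreover have "DNuph (333/212 * padeQ2 u - padeP2 u) (padeQ2 u) u = pol_DNu u" unfolding DNuph_def pol_DNu_def padeP2_def padeQ2_def by algebra
    moreover have "0 < pol_DNu u" using pos_DNu[of u] u0 uh by simp
    ultimately show ?thesis using Q2 by simp
  qed
  have "DNup l u \<le> DNup x u" by (rule DNu_mono) (use bl b0 lx u0 in auto)
  hence "0 < DNup x u" using DNl by linarith
  hence DN: "0 < DNp x t" unfolding tu using DNp_u[of u x] u0 by simp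
  define v where "v = 3927/2500 - padeP3 u / padeQ3 u"
  have xv: "x \<le> v" unfolding v_def xe using a3 pi_hi by linarith
  have Mv: "0 < 81*u + (1 - 57*u^2)*v - (24*u^3 + 36*u)*v^2"
  proof -
    have ve: "v = (3927/2500 * padeQ3 u - padeP3 u) / padeQ3 u" unfolding v_def using Q3 by (simp add: field_simps)
    have "81*u + (1 - 57*u^2)*v - (24*u^3 + 36*u)*v^2 = (81*u*(padeQ3 u)^2 + (1 - 57*u^2)*(3927/2500 * padeQ3 u - padeP3 u)*padeQ3 u - (24*u^3 + 36*u)*(3927/2500 * padeQ3 u - padeP3 u)^2) / (padeQ3 u)^2"
      unfolding ve by (rule quad_frac) (use Q3 in simp)
    moreover have "81*u*(padeQ3 u)^2 + (1 - 57*u^2)*(3927/2500 * padeQ3 u - padeP3 u)*padeQ3 u - (24*u^3 + 36*u)*(3927/2500 * padeQ3 u - padeP3 u)^2 = pol_Mu u"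
      unfolding pol_Mu_def padeP3_def padeQ3_def by algebra
    ultimately have "81*u + (1 - 57*u^2)*v - (24*u^3 + 36*u)*v^2 = pol_Mu u / (padeQ3 u)^2" by simp
    moreover have "0 < pol_Mu u" using pos_Mu[of u] u0 uh by simp
    ultimately show ?thesis using Q3 by simp
  qed
  have "0 < Mup x u" unfolding Mup_def
    by (rule quad_pos[OF _ Mv]) (use u0 x0 xv in auto)
  hence M: "0 < Mp x t" unfolding tu using Mp_u[of u x] u0 by simp
  show ?thesis using W D DN M by (simp add: x_def)
qed

lemma key:
  fixes t :: real assumes "0 < t"
  shows "0 < Wp (arctan t) t \<and> 0 < Dp (arctan t) t \<and> 0 < DNp (arctan t) t \<and> 0 < Mp (arctan t) t"
  using key_small[OF assms] key_large by (cases "t \<le> 2") auto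

lemma key_x:
  fixes x :: real assumes "0 < x" "x < pi/2"
  shows "0 < Wp x (tan x) \<and> 0 < Dp x (tan x) \<and> 0 < DNp x (tan x) \<and> 0 < Mp x (tan x)"
proof -
  have "0 < tan x" using assms by (simp add: tan_gt_zero)
  moreover have "arctan (tan x) = x" using assms by (intro arctan_tan) auto
  ultimately show ?thesis using key[of "tan x"] by simp
qed

lemma trig_repr:
  fixes x :: real assumes "0 < x" "x < pi/2"
  shows "lemB x - 3 * lemA x = (cos x)^3 * Dp x (tan x)"
    and "lemC x - 8/5 * lemA x = (cos x)^3 * Np x (tan x)"
proof -
  have c0: "cos x \<noteq> 0" using assms cos_gt_zero_pi[of x] by simp
  define c where "c = cos x"
  define t where "t = tan x"
  have s: "sin x = t * c" unfolding t_def c_def tan_def using c0 by simp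
  have r: "c^2 * (1 + t^2) = 1"
  proof -
    have "(sin x)^2 + c^2 = 1" unfolding c_def by simp
    thus ?thesis unfolding s by (simp add: algebra_simps power_mult_distrib)
  qed
  have "lemB x - 3 * lemA x = c^3 * Dp x t" unfolding lemB_def lemA_def Dp_def s c_def[symmetric] by algebra
  thus "lemB x - 3 * lemA x = (cos x)^3 * Dp x (tan x)" by (simp add: c_def t_def)
  have "lemC x - 8/5 * lemA x = c^3 * Np x t" unfolding lemC_def lemA_def Np_def s c_def[symmetric] using r by algebra
  thus "lemC x - 8/5 * lemA x = (cos x)^3 * Np x (tan x)" by (simp add: c_def t_def)
qed

lemma g2_repr:
  fixes x :: real assumes "0 < x" "x < pi/2"
  shows "g2 x = Np x (tan x) / Dp x (tan x)"
proof -
  have c0: "0 < cos x" using assms cos_gt_zero_pi[of x] by simp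
  show ?thesis unfolding g2_def trig_repr[OF assms] using c0 by simp
qed

lemma dNp:
  fixes x :: real assumes "cos x \<noteq> 0"
  shows "((\<lambda>y. Np y (tan y)) has_real_derivative
     ((2*(-18/5 - 2*(tan x)^2)*x + 21/5*tan x + (tan x)^3) + (-4*tan x*x^2 + (21/5 + 3*(tan x)^2)*x - 6/5*tan x)*(1 + (tan x)^2))) (at x)"
proof -
  have e: "inverse ((cos x)^2) = 1 + (tan x)^2" using tan_sec[OF assms] by (simp add: power_inverse)
  show ?thesis unfolding Np_def
    apply (rule DERIV_cong)
     apply (rule derivative_eq_intros refl assms)+
    apply (unfold e)?
    by (simp; algebra)
qed

lemma dDp:
  fixes x :: real assumes "cos x \<noteq> 0"
  shows "((\<lambda>y. Dp y (tan y)) has_real_derivative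
     ((-2*(3 + (tan x)^2)*x + 6*tan x + (tan x)^3) + (-2*tan x*x^2 + (6 + 3*(tan x)^2)*x - 6*tan x)*(1 + (tan x)^2))) (at x)"
proof -
  have e: "inverse ((cos x)^2) = 1 + (tan x)^2" using tan_sec[OF assms] by (simp add: power_inverse)
  show ?thesis unfolding Dp_def
    apply (rule DERIV_cong)
     apply (rule derivative_eq_intros refl assms)+
    apply (unfold e)?
    by (simp; algebra)
qed

lemma g2_deriv:
  fixes x :: real assumes x: "0 < x" "x < pi/2"
  shows "(g2 has_real_derivative Wp x (tan x) / (Dp x (tan x))^2) (at x)"
proof -
  have c0: "cos x \<noteq> 0" using x cos_gt_zero_pi[of x] by simp
  have Dn: "Dp x (tan x) \<noteq> 0" using key_x[OF x] by simp
  have iden: "((2*(-18/5 - 2*(tan x)^2)*x + 21/5*tan x + (tan x)^3) + (-4*tan x*x^2 + (21/5 + 3*(tan x)^2)*x - 6/5*tan x)*(1 + (tan x)^2)) * Dp x (tan x)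
     - Np x (tan x) * ((-2*(3 + (tan x)^2)*x + 6*tan x + (tan x)^3) + (-2*tan x*x^2 + (6 + 3*(tan x)^2)*x - 6*tan x)*(1 + (tan x)^2)) = Wp x (tan x)"
    unfolding Wp_def Np_def Dp_def by algebra
  have d: "((\<lambda>y. Np y (tan y) / Dp y (tan y)) has_real_derivative Wp x (tan x) / (Dp x (tan x))^2) (at x)"
    apply (rule DERIV_cong)
     apply (rule DERIV_divide[OF dNp[OF c0] dDp[OF c0] Dn])
    using iden by (simp add: power2_eq_square)
  show ?thesis
    by (rule has_field_derivative_transform_within_open[OF d, where S="{0<..<pi/2}"]) (use x g2_repr in auto)
qed

theorem lemma7:
  shows "(\<forall>x\<in>{0<..<pi/2}. lemB x - 3 * lemA x > 0)
       \<and> strict_mono_on {0<..<pi/2} g2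
       \<and> (\<forall>x\<in>{0<..<pi/2}. 34/35 < g2 x \<and> g2 x < 1)"
proof (intro conjI ballI)
  fix x :: real assume "x \<in> {0<..<pi/2}"
  hence x: "0 < x" "x < pi/2" by auto
  have c0: "0 < cos x" using x cos_gt_zero_pi[of x] by simp
  show "lemB x - 3 * lemA x > 0" unfolding trig_repr(1)[OF x] using key_x[OF x] c0 by simp
next
  show "strict_mono_on {0<..<pi/2} g2"
  proof (rule strict_mono_onI)
    fix a b :: real assume ab: "a \<in> {0<..<pi/2}" "b \<in> {0<..<pi/2}" "a < b"
    show "g2 a < g2 b"
    proof (rule DERIV_pos_imp_increasing[OF ab(3)])
      fix y assume y: "a \<le> y" "y \<le> b"
      hence y': "0 < y" "y < pi/2" using ab by auto
      have "0 < Wp y (tan y) / (Dp y (tan y))^2" using key_x[OF y'] by simp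
      thus "\<exists>z. DERIV g2 y :> z \<and> 0 < z" using g2_deriv[OF y'] by blast
    qed
  qed
next
  fix x :: real assume "x \<in> {0<..<pi/2}"
  hence x: "0 < x" "x < pi/2" by auto
  have k: "0 < Dp x (tan x)" "0 < DNp x (tan x)" "0 < Mp x (tan x)" using key_x[OF x] by auto
  have g: "g2 x = Np x (tan x) / Dp x (tan x)" by (rule g2_repr[OF x])
  have n1: "Np x (tan x) < Dp x (tan x)" using k(2) DN_eq[of x "tan x"] by linarith
  have n2: "34 * Dp x (tan x) < 35 * Np x (tan x)" using k(3) M_eq[of x "tan x"] by linarith
  show "34/35 < g2 x" unfolding g using k(1) n2 by (simp add: field_simps)
  show "g2 x < 1" unfolding g using k(1) n1 by (simp add: field_simps)
qed

end
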